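(* Let $H$ be a separable infinite-dimensional complex Hilbert space. Let $x_1,\dots,x_n,y_1,\dots,y_n\in H$ be vectors of norm $1$, let $T\in L(H)$ with $\|T\|\le 1$, let $x\in H\setminus\{0\}$, $z\in H$ and $\epsilon>0$. Then there exist a finite rank operator $S\in L(H)$ with $\|S\|\le 1$, a number $a\in\mathbb{R}$ and a natural number $N$ depending only on $\epsilon$ such that $|\langle (S-T)x_j,y_j\rangle|<\epsilon$ and $\langle z-aS^Nx,y_j\rangle=0$ for every $j=1,\dots,n$, and $\|S^{l+1}x\|=\|S^lx\|$ for every integer $0\le l<N$.
   Context: $L(H)$ denotes the bounded linear operators on $H$; $\langle\cdot,\cdot\rangle$ is the inner product of $H$. *)

theory Defs
  imports "HOL-Analysis.Analysis"
begin

text \<open>Complex Hilbert spaces are not available in the distribution libraries,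
  so we introduce the class of complex inner product spaces that are complete
  (i.e. complex Hilbert spaces) on top of the library's real Banach spaces.
  The inner product is linear in the first and conjugate linear in the second
  argument, and induces the norm.\<close>

class complex_hilbert = banach +
  fixes scaleC :: "complex \<Rightarrow> 'a \<Rightarrow> 'a" (infixr "*\<^sub>C" 75)
    and cinner :: "'a \<Rightarrow> 'a \<Rightarrow> complex"
  assumes scaleC_add_right: "c *\<^sub>C (x + y) = c *\<^sub>C x + c *\<^sub>C y"
    and scaleC_add_left: "(c + d) *\<^sub>C x = c *\<^sub>C x + d *\<^sub>C x"
    and scaleC_scaleC: "c *\<^sub>C (d *\<^sub>C x) = (c * d) *\<^sub>C x"
    and scaleC_one: "1 *\<^sub>C x = x"
    and scaleR_scaleC: "r *\<^sub>R x = complex_of_real r *\<^sub>C x"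
    and cinner_add_left: "cinner (x + y) z = cinner x z + cinner y z"
    and cinner_scaleC_left: "cinner (c *\<^sub>C x) y = c * cinner x y"
    and cinner_commute: "cinner y x = cnj (cinner x y)"
    and cinner_self_norm: "cinner x x = complex_of_real ((norm x)\<^sup>2)"

definition cspan :: "'a::complex_hilbert set \<Rightarrow> 'a set" where
  "cspan B = {v. \<exists>F c. finite F \<and> F \<subseteq> B \<and> v = (\<Sum>b\<in>F. c b *\<^sub>C b)}"

definition infinite_dimensional :: "'a::complex_hilbert itself \<Rightarrow> bool" where
  "infinite_dimensional _ \<longleftrightarrow> \<not> (\<exists>B::'a set. finite B \<and> cspan B = UNIV)"

definition clinear_op :: "('a::complex_hilbert \<Rightarrow> 'a) \<Rightarrow> bool" where
  "clinear_op T \<longleftrightarrow> (\<forall>x y. T (x + y) = T x + T y) \<and> (\<forall>c x. T (c *\<^sub>C x) = c *\<^sub>C T x)"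

definition bounded_op :: "('a::complex_hilbert \<Rightarrow> 'a) \<Rightarrow> bool" where
  "bounded_op T \<longleftrightarrow> clinear_op T \<and> (\<exists>K. \<forall>x. norm (T x) \<le> K * norm x)"

definition finite_rank :: "('a::complex_hilbert \<Rightarrow> 'a) \<Rightarrow> bool" where
  "finite_rank T \<longleftrightarrow> (\<exists>B. finite B \<and> range T \<subseteq> cspan B)"

end

theory Submission
  imports Defs
begin


context complex_hilbert begin

lemma scaleC_zero_left[simp]: "0 *\<^sub>C x = 0"
  using scaleC_add_left[of 0 0 x] by simp

lemma scaleC_zero_right[simp]: "c *\<^sub>C 0 = 0"
  using scaleC_add_right[of c 0 0] by simp

lemma scaleC_minus_left: "(- c) *\<^sub>C x = - (c *\<^sub>C x)"
  using scaleC_add_left[of c "-c" x] by (simp add: add.commute eq_neg_iff_add_eq_0)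

lemma scaleC_minus_right: "c *\<^sub>C (- x) = - (c *\<^sub>C x)"
  using scaleC_add_right[of c x "-x"] by (simp add: add.commute eq_neg_iff_add_eq_0)

lemma scaleC_diff_right: "c *\<^sub>C (x - y) = c *\<^sub>C x - c *\<^sub>C y"
  using scaleC_add_right[of c x "-y"] by (simp add: scaleC_minus_right)

lemma scaleC_diff_left: "(c - d) *\<^sub>C x = c *\<^sub>C x - d *\<^sub>C x"
  using scaleC_add_left[of c "-d" x] by (simp add: scaleC_minus_left)

lemma scaleC_sum_right: "c *\<^sub>C (\<Sum>i\<in>A. f i) = (\<Sum>i\<in>A. c *\<^sub>C f i)"
  by (induction A rule: infinite_finite_induct) (simp_all add: scaleC_add_right)

lemma scaleC_sum_left: "(\<Sum>i\<in>A. f i) *\<^sub>C x = (\<Sum>i\<in>A. f i *\<^sub>C x)"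
  by (induction A rule: infinite_finite_induct) (simp_all add: scaleC_add_left)

lemma cinner_zero_left[simp]: "cinner 0 y = 0"
  using cinner_add_left[of 0 0 y] by simp

lemma cinner_zero_right[simp]: "cinner y 0 = 0"
  using cinner_commute[of 0 y] by simp

lemma cinner_add_right: "cinner x (y + z) = cinner x y + cinner x z"
  by (metis cinner_add_left cinner_commute complex_cnj_add)

lemma cinner_scaleC_right: "cinner x (c *\<^sub>C y) = cnj c * cinner x y"
  by (metis cinner_scaleC_left cinner_commute complex_cnj_mult)

lemma cinner_minus_left: "cinner (- x) y = - cinner x y"
proof -
  have "cinner x y + cinner (- x) y = 0" using cinner_add_left[of x "-x" y] by simp
  have "cinner (- x) y = (cinner x y + cinner (- x) y) - cinner x y" by simp
  then show ?thesis using \<open>cinner x y + cinner (- x) y = 0\<close> by simp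
qed

lemma cinner_minus_right: "cinner x (- y) = - cinner x y"
  by (metis cinner_commute cinner_minus_left complex_cnj_minus)

lemma cinner_diff_left: "cinner (x - y) z = cinner x z - cinner y z"
  using cinner_add_left[of x "-y" z] by (simp add: cinner_minus_left)

lemma cinner_diff_right: "cinner z (x - y) = cinner z x - cinner z y"
  using cinner_add_right[of z x "-y"] by (simp add: cinner_minus_right)

lemma cinner_sum_left: "cinner (\<Sum>i\<in>A. f i) y = (\<Sum>i\<in>A. cinner (f i) y)"
  by (induction A rule: infinite_finite_induct) (simp_all add: cinner_add_left)

lemma cinner_sum_right: "cinner y (\<Sum>i\<in>A. f i) = (\<Sum>i\<in>A. cinner y (f i))"
  by (induction A rule: infinite_finite_induct) (simp_all add: cinner_add_right)

lemma norm_sq_cinner: "(norm x)\<^sup>2 = Re (cinner x x)"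
  by (simp add: cinner_self_norm)

lemma cinner_self_eq_0: "cinner x x = 0 \<longleftrightarrow> x = 0"
  by (simp add: cinner_self_norm)

lemma norm_scaleC: "norm (c *\<^sub>C x) = cmod c * norm x"
proof -
  have "cinner (c *\<^sub>C x) (c *\<^sub>C x) = c * cnj c * cinner x x"
    by (simp add: cinner_scaleC_left cinner_scaleC_right mult.assoc)
  then have "(norm (c *\<^sub>C x))\<^sup>2 = Re (c * cnj c * cinner x x)"
    by (simp only: norm_sq_cinner)
  also have "\<dots> = Re (complex_of_real ((Re c)\<^sup>2 + (Im c)\<^sup>2) * complex_of_real ((norm x)\<^sup>2))"
    by (simp only: complex_mult_cnj cinner_self_norm)
  also have "\<dots> = (cmod c * norm x)\<^sup>2"
    by (simp add: power_mult_distrib cmod_power2)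
  finally show ?thesis
    by (simp add: power2_eq_iff_nonneg)
qed

lemma scaleR_as_C: "r *\<^sub>R x = complex_of_real r *\<^sub>C x"
  by (rule scaleR_scaleC)

end




lemma cnj_self1: "cnj a * a = complex_of_real ((cmod a)\<^sup>2)"
  by (metis complex_norm_square mult.commute)
lemma cnj_self2: "a * cnj a = complex_of_real ((cmod a)\<^sup>2)"
  by (metis complex_norm_square)

locale hf =
  fixes q :: "'a::complex_hilbert \<Rightarrow> 'a \<Rightarrow> complex"
  assumes add_l: "q (x + y) z = q x z + q y z"
    and scale_l: "q (c *\<^sub>C x) y = c * q x y"
    and comm: "q y x = cnj (q x y)"
    and pos: "0 \<le> Re (q x x)"
begin

lemma zero_l[simp]: "q 0 y = 0"
  using add_l[of 0 0 y] by simp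
lemma zero_r[simp]: "q y 0 = 0"
  using comm[of 0 y] by simp
lemma add_r: "q x (y + z) = q x y + q x z"
  by (metis add_l comm complex_cnj_add)
lemma scale_r: "q x (c *\<^sub>C y) = cnj c * q x y"
  by (metis scale_l comm complex_cnj_mult)
lemma minus_l: "q (- x) y = - q x y"
proof -
  have h: "q x y + q (- x) y = 0" using add_l[of x "-x" y] by simp
  have "q (- x) y = (q x y + q (- x) y) - q x y" by simp
  then show ?thesis using h by simp
qed
lemma minus_r: "q x (- y) = - q x y"
  by (metis comm minus_l complex_cnj_minus)
lemma diff_l: "q (x - y) z = q x z - q y z"
  using add_l[of x "-y" z] by (simp add: minus_l)
lemma diff_r: "q z (x - y) = q z x - q z y"
  using add_r[of z x "-y"] by (simp add: minus_r)
lemma sum_l: "q (\<Sum>i\<in>A. f i) y = (\<Sum>i\<in>A. q (f i) y)"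
  by (induction A rule: infinite_finite_induct) (simp_all add: add_l)
lemma sum_r: "q y (\<Sum>i\<in>A. f i) = (\<Sum>i\<in>A. q y (f i))"
  by (induction A rule: infinite_finite_induct) (simp_all add: add_r)
lemma self_real: "q x x = complex_of_real (Re (q x x))"
proof -
  have "q x x = cnj (q x x)" by (rule comm)
  then have "Im (q x x) = 0" by (metis cnj.sel(2) equal_neg_zero)
  then show ?thesis by (simp add: complex_eq_iff)
qed

lemma null:
  assumes "q r r = 0" shows "q r w = 0"
proof -
  define a where "a = q r w"
  define Q where "Q = Re (q w w)"
  have Q0: "0 \<le> Q" using pos unfolding Q_def by simp
  define t where "t = 1 / (Q + 1)"
  have t0: "0 < t" using Q0 unfolding t_def by simp
  have tQ: "t * Q < 1" using Q0 unfolding t_def by (simp add: field_simps)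
  define s where "s = complex_of_real t * a"
  have "q (r - s *\<^sub>C w) (r - s *\<^sub>C w) = q r r - cnj s * q r w - s * q w r + s * cnj s * q w w"
    by (simp add: diff_l diff_r scale_l scale_r algebra_simps)
  also have "\<dots> = - complex_of_real (2 * t * (cmod a)\<^sup>2) + complex_of_real (t\<^sup>2 * (cmod a)\<^sup>2 * Q)"
  proof -
    have e1: "cnj s * q r w = complex_of_real (t * (cmod a)\<^sup>2)"
      unfolding s_def a_def by (simp add: mult.assoc cnj_self1)
    have e2: "s * q w r = complex_of_real (t * (cmod a)\<^sup>2)"
      unfolding s_def a_def using comm[of w r] by (simp add: mult.assoc cnj_self2)
    have e3: "s * cnj s * q w w = complex_of_real (t\<^sup>2 * (cmod a)\<^sup>2 * Q)"
          proof -
      have "cmod s = t * cmod a" unfolding s_def using t0 by (simp add: norm_mult)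
      then have "s * cnj s = complex_of_real (t\<^sup>2 * (cmod a)\<^sup>2)"
        by (simp add: cnj_self2 power_mult_distrib)
      moreover have "q w w = complex_of_real Q" unfolding Q_def by (rule self_real)
      ultimately show ?thesis by simp
    qed
    show ?thesis using assms e1 e2 e3 by simp
  qed
  finally have "Re (q (r - s *\<^sub>C w) (r - s *\<^sub>C w)) = Re (- complex_of_real (2 * t * (cmod a)\<^sup>2) + complex_of_real (t\<^sup>2 * (cmod a)\<^sup>2 * Q))"
    by (rule arg_cong[where f=Re])
  also have "\<dots> = (cmod a)\<^sup>2 * t * (t * Q - 2)"
    by (simp add: power2_eq_square algebra_simps)
  finally have "Re (q (r - s *\<^sub>C w) (r - s *\<^sub>C w)) = (cmod a)\<^sup>2 * t * (t * Q - 2)" .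
  moreover have "0 \<le> Re (q (r - s *\<^sub>C w) (r - s *\<^sub>C w))" by (rule pos)
  ultimately have "0 \<le> (cmod a)\<^sup>2 * t * (t * Q - 2)" by simp
  moreover have "t * (t * Q - 2) < 0" using t0 tQ by (simp add: mult_pos_neg)
  ultimately have "(cmod a)\<^sup>2 \<le> 0"
    using mult_pos_neg[of "(cmod a)\<^sup>2" "t * (t * Q - 2)"] by (cases "a = 0") (simp_all add: mult.assoc)
  then show ?thesis unfolding a_def by simp
qed

definition on :: "(nat \<Rightarrow> 'a) \<Rightarrow> nat \<Rightarrow> bool" where
  "on g k \<longleftrightarrow> (\<forall>i<k. \<forall>j<k. q (g i) (g j) = (if i = j then 1 else 0))"

definition proj :: "(nat \<Rightarrow> 'a) \<Rightarrow> nat \<Rightarrow> 'a \<Rightarrow> 'a" where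
  "proj g k v = (\<Sum>i<k. q v (g i) *\<^sub>C g i)"

definition nullv :: "'a \<Rightarrow> bool" where "nullv r \<longleftrightarrow> (\<forall>w. q r w = 0)"

lemma proj_inner:
  assumes "on g k" "j < k" shows "q (proj g k v) (g j) = q v (g j)"
proof -
  have "q (proj g k v) (g j) = (\<Sum>i<k. q v (g i) * q (g i) (g j))"
    unfolding proj_def by (simp add: sum_l scale_l)
  also have "\<dots> = (\<Sum>i<k. if i = j then q v (g j) else 0)"
    using assms unfolding on_def by (intro sum.cong) auto
  also have "\<dots> = q v (g j)" using assms by simp
  finally show ?thesis .
qed

lemma proj_extend:
  assumes "on g k'" "k \<le> k'" "nullv (v - proj g k v)"
  shows "proj g k' v = proj g k v"
proof -
  have z: "q v (g i) = 0" if "k \<le> i" "i < k'" for i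
  proof -
    have "q v (g i) = q (v - proj g k v) (g i) + q (proj g k v) (g i)"
      by (simp add: diff_l)
    also have "q (proj g k v) (g i) = (\<Sum>j<k. q v (g j) * q (g j) (g i))"
      unfolding proj_def by (simp add: sum_l scale_l)
    also have "\<dots> = 0" using assms(1,2) that unfolding on_def by (intro sum.neutral) auto
    finally show ?thesis using assms(3) unfolding nullv_def by simp
  qed
  have "proj g k' v = (\<Sum>i<k. q v (g i) *\<^sub>C g i) + (\<Sum>i\<in>{k..<k'}. q v (g i) *\<^sub>C g i)"
    unfolding proj_def using assms(2)
    by (metis atLeast0LessThan sum.atLeastLessThan_concat zero_le)
  also have "(\<Sum>i\<in>{k..<k'}. q v (g i) *\<^sub>C g i) = 0"
    using z by (intro sum.neutral) auto
  finally show ?thesis unfolding proj_def by simp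
qed

lemma gs:
  assumes "on g k"
  shows "\<exists>g' k'. k \<le> k' \<and> (\<forall>i<k. g' i = g i) \<and> on g' k' \<and> (\<forall>v\<in>set vs. nullv (v - proj g' k' v))"
  using assms
proof (induction vs arbitrary: g k)
  case Nil
  then show ?case by auto
next
  case (Cons v vs)
  define r where "r = v - proj g k v"
  show ?case
  proof (cases "q r r = 0")
    case True
    then have nr: "nullv r" unfolding nullv_def using null by blast
    obtain g' k' where h: "k \<le> k'" "\<forall>i<k. g' i = g i" "on g' k'" "\<forall>v\<in>set vs. nullv (v - proj g' k' v)"
      using Cons.IH[OF Cons.prems] by blast
    have pe: "proj g' k v = proj g k v" unfolding proj_def using h(2) by simp
    have "proj g' k' v = proj g' k v"
      by (rule proj_extend[OF h(3) h(1)]) (use nr pe r_def in simp)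
    then have "nullv (v - proj g' k' v)" using nr pe r_def by simp
    then show ?thesis using h by auto
  next
    case False
    define Q where "Q = Re (q r r)"
    have Qr: "q r r = complex_of_real Q" unfolding Q_def by (rule self_real)
    have "Q \<noteq> 0" using False Qr by auto
    then have Q0: "0 < Q" using pos[of r] unfolding Q_def by linarith
    define c where "c = 1 / sqrt Q"
    have ccQ: "c * c * Q = 1" unfolding c_def using Q0
      by (simp add: field_simps)
    define g1 where "g1 = complex_of_real c *\<^sub>C r"
    define G where "G = g(k := g1)"
    have rg: "q r (g j) = 0" if "j < k" for j
      unfolding r_def using proj_inner[OF Cons.prems that] by (simp add: diff_l)
    have onG: "on G (Suc k)"
      unfolding on_def
    proof (intro allI impI)
      fix i j assume ij: "i < Suc k" "j < Suc k"
      have g11: "q g1 g1 = 1"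
      proof -
        have "q g1 g1 = complex_of_real (c * c * Q)" unfolding g1_def by (simp add: scale_l scale_r Qr)
        then show ?thesis using ccQ by simp
      qed
      have gij: "q g1 (g j) = 0" if "j < k" for j
        unfolding g1_def using rg[OF that] by (simp add: scale_l)
      show "q (G i) (G j) = (if i = j then 1 else 0)"
      proof (cases "i = k")
        case True
        then show ?thesis using ij g11 gij unfolding G_def by (cases "j = k") auto
      next
        case False
        then show ?thesis
        proof (cases "j = k")
          case True
          then show ?thesis using ij gij[of i] False comm[of g1 "g i"] unfolding G_def by auto
        next
          case False
          then show ?thesis using ij \<open>i \<noteq> k\<close> Cons.prems unfolding G_def on_def by auto
        qed
      qed
    qed
    have pG: "proj G (Suc k) v = proj g k v + q v g1 *\<^sub>C g1"
      unfolding proj_def G_def by (simp add: sum.lessThan_Suc)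
    have qvg1: "q v g1 = complex_of_real c * q r r"
    proof -
      have "q v g1 = q r g1 + q (proj g k v) g1" unfolding r_def by (simp add: diff_l)
      also have "q (proj g k v) g1 = 0"
      proof -
        have "q (proj g k v) g1 = (\<Sum>i<k. q v (g i) * q (g i) g1)"
          unfolding proj_def by (simp add: sum_l scale_l)
        also have "\<dots> = 0"
        proof (intro sum.neutral ballI)
          fix i assume "i \<in> {..<k}"
          then have "q r (g i) = 0" using rg by simp
          then have "q (g i) r = 0" using comm[of "g i" r] by simp
          then show "q v (g i) * q (g i) g1 = 0" unfolding g1_def by (simp add: scale_r)
        qed
        finally show ?thesis .
      qed
      finally show ?thesis unfolding g1_def by (simp add: scale_r)
    qed
    have "v - proj G (Suc k) v = r - (complex_of_real c * q r r) *\<^sub>C g1"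
      unfolding pG qvg1 r_def by simp
    also have "\<dots> = r - (complex_of_real (c * c * Q)) *\<^sub>C r"
      unfolding g1_def Qr by (simp add: scaleC_scaleC mult.commute mult.left_commute)
    also note ccQ
    finally have nv: "v - proj G (Suc k) v = 0" by (simp add: scaleC_one)
    obtain g' k' where h: "Suc k \<le> k'" "\<forall>i<Suc k. g' i = G i" "on g' k'" "\<forall>v\<in>set vs. nullv (v - proj g' k' v)"
      using Cons.IH[OF onG] by blast
    have pe: "proj g' (Suc k) v = proj G (Suc k) v" unfolding proj_def using h(2) by simp
    have "proj g' k' v = proj g' (Suc k) v"
      by (rule proj_extend[OF h(3) h(1)]) (use nv pe in \<open>simp add: nullv_def\<close>)
    then have "nullv (v - proj g' k' v)" using nv pe by (simp add: nullv_def)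
    moreover have "\<forall>i<k. g' i = g i" using h(2) unfolding G_def by auto
    moreover have "k \<le> k'" using h(1) by simp
    ultimately show ?thesis using h(3,4) by auto
  qed
qed

end




interpretation ci: hf "cinner :: 'a::complex_hilbert \<Rightarrow> 'a \<Rightarrow> complex"
proof
  fix x y z :: 'a and c
  show "cinner (x + y) z = cinner x z + cinner y z" by (rule cinner_add_left)
  show "cinner (c *\<^sub>C x) y = c * cinner x y" by (rule cinner_scaleC_left)
  show "cinner y x = cnj (cinner x y)" by (rule cinner_commute)
  show "0 \<le> Re (cinner x x)" by (simp add: cinner_self_norm)
qed

definition orthon :: "('i \<Rightarrow> 'a::complex_hilbert) \<Rightarrow> 'i set \<Rightarrow> bool" where
  "orthon b I \<longleftrightarrow> (\<forall>i\<in>I. \<forall>j\<in>I. cinner (b i) (b j) = (if i = j then 1 else 0))"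

lemma comb_inner:
  assumes "orthon b I" "finite I" "k \<in> I"
  shows "cinner (\<Sum>i\<in>I. c i *\<^sub>C b i) (b k) = c k"
proof -
  have "cinner (\<Sum>i\<in>I. c i *\<^sub>C b i) (b k) = (\<Sum>i\<in>I. c i * cinner (b i) (b k))"
    by (simp add: cinner_sum_left cinner_scaleC_left)
  also have "\<dots> = (\<Sum>i\<in>I. if i = k then c k else 0)"
    using assms unfolding orthon_def by (intro sum.cong) auto
  also have "\<dots> = c k" using assms by simp
  finally show ?thesis .
qed

lemma comb_inner2:
  assumes "orthon b I" "finite I" "k \<in> I"
  shows "cinner (b k) (\<Sum>i\<in>I. c i *\<^sub>C b i) = cnj (c k)"
  using comb_inner[OF assms, of c] cinner_commute by metis

lemma comb_inner_out:
  assumes "\<forall>i\<in>I. cinner (b i) w = 0"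
  shows "cinner (\<Sum>i\<in>I. c i *\<^sub>C b i) w = 0"
  using assms by (simp add: cinner_sum_left cinner_scaleC_left)

lemma comb_cinner:
  assumes "orthon b I" "finite I"
  shows "cinner (\<Sum>i\<in>I. c i *\<^sub>C b i) (\<Sum>i\<in>I. d i *\<^sub>C b i) = (\<Sum>i\<in>I. c i * cnj (d i))"
proof -
  have "cinner (\<Sum>i\<in>I. c i *\<^sub>C b i) (\<Sum>i\<in>I. d i *\<^sub>C b i) = (\<Sum>i\<in>I. c i * cinner (b i) (\<Sum>i\<in>I. d i *\<^sub>C b i))"
    by (simp add: cinner_sum_left cinner_scaleC_left)
  also have "\<dots> = (\<Sum>i\<in>I. c i * cnj (d i))"
    using comb_inner2[OF assms] by (intro sum.cong) auto
  finally show ?thesis .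
qed

lemma comb_norm2:
  assumes "orthon b I" "finite I"
  shows "(norm (\<Sum>i\<in>I. c i *\<^sub>C b i))\<^sup>2 = (\<Sum>i\<in>I. (cmod (c i))\<^sup>2)"
proof -
  have "(norm (\<Sum>i\<in>I. c i *\<^sub>C b i))\<^sup>2 = Re (\<Sum>i\<in>I. c i * cnj (c i))"
    by (simp add: norm_sq_cinner comb_cinner[OF assms])
  also have "\<dots> = (\<Sum>i\<in>I. (cmod (c i))\<^sup>2)"
    by (simp add: cnj_self2)
  finally show ?thesis .
qed

lemma bessel:
  assumes "orthon b I" "finite I"
  shows "(\<Sum>i\<in>I. (cmod (cinner u (b i)))\<^sup>2) \<le> (norm u)\<^sup>2"
proof -
  define p where "p = (\<Sum>i\<in>I. cinner u (b i) *\<^sub>C b i)"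
  define w where "w = u - p"
  have wb: "cinner w (b k) = 0" if "k \<in> I" for k
    unfolding w_def p_def using comb_inner[OF assms that] by (simp add: cinner_diff_left)
  have wp: "cinner w p = 0"
    unfolding p_def by (simp add: cinner_sum_right cinner_scaleC_right wb)
  have pw: "cinner p w = 0" using wp cinner_commute[of p w] by simp
  have "(norm u)\<^sup>2 = Re (cinner (w + p) (w + p))" by (simp add: w_def norm_sq_cinner)
  also have "\<dots> = Re (cinner w w) + Re (cinner p p)"
    by (simp add: cinner_add_left cinner_add_right wp pw)
  also have "Re (cinner p p) = (\<Sum>i\<in>I. (cmod (cinner u (b i)))\<^sup>2)"
    using comb_norm2[OF assms] unfolding p_def by (simp add: norm_sq_cinner)
  finally show ?thesis by (simp add: cinner_self_norm)
qed

lemma cauchy_schwarz: "cmod (cinner x y) \<le> norm x * norm y"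
proof (cases "y = 0")
  case True then show ?thesis by simp
next
  case False
  define e where "e = complex_of_real (1 / norm y) *\<^sub>C y"
  have ne: "norm e = 1" unfolding e_def using False by (simp add: norm_scaleC norm_divide)
  have oe: "orthon (\<lambda>_. e) {()}" unfolding orthon_def using ne by (simp add: cinner_self_norm)
  have "(cmod (cinner x e))\<^sup>2 \<le> (norm x)\<^sup>2" using bessel[OF oe, of x] by simp
  then have "cmod (cinner x e) \<le> norm x" by (simp add: power2_le_iff_abs_le)
  moreover have "cinner x y = complex_of_real (norm y) * cinner x e"
    unfolding e_def using False by (simp add: cinner_scaleC_right)
  ultimately show ?thesis using False by (simp add: norm_mult mult.commute mult_left_mono)
qed

lemma cspan_base: "v \<in> A \<Longrightarrow> c *\<^sub>C v \<in> cspan A"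
  unfolding cspan_def by (rule CollectI, rule exI[of _ "{v}"], rule exI[of _ "\<lambda>_. c"]) simp

lemma cspan_zero: "0 \<in> cspan A"
  unfolding cspan_def by (rule CollectI, rule exI[of _ "{}"]) simp

lemma cspan_mono: "A \<subseteq> B \<Longrightarrow> cspan A \<subseteq> cspan B"
  unfolding cspan_def by blast

lemma cspan_add:
  assumes "u \<in> cspan A" "v \<in> cspan A" shows "u + v \<in> cspan A"
proof -
  obtain F1 c1 where 1: "finite F1" "F1 \<subseteq> A" "u = (\<Sum>b\<in>F1. c1 b *\<^sub>C b)" using assms(1) unfolding cspan_def by blast
  obtain F2 c2 where 2: "finite F2" "F2 \<subseteq> A" "v = (\<Sum>b\<in>F2. c2 b *\<^sub>C b)" using assms(2) unfolding cspan_def by blast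
  define c where "c b = (if b \<in> F1 then c1 b else 0) + (if b \<in> F2 then c2 b else 0)" for b
  have a: "(\<Sum>b\<in>F1 \<union> F2. (if b \<in> F1 then c1 b else 0) *\<^sub>C b) = (\<Sum>b\<in>F1. c1 b *\<^sub>C b)"
    by (rule sum.mono_neutral_cong_right) (use 1 2 in auto)
  have b: "(\<Sum>b\<in>F1 \<union> F2. (if b \<in> F2 then c2 b else 0) *\<^sub>C b) = (\<Sum>b\<in>F2. c2 b *\<^sub>C b)"
    by (rule sum.mono_neutral_cong_right) (use 1 2 in auto)
  have "u + v = (\<Sum>b\<in>F1 \<union> F2. c b *\<^sub>C b)"
    unfolding c_def scaleC_add_left sum.distrib a b 1 2 ..
  then show ?thesis unfolding cspan_def using 1 2 by blast
qed

lemma cspan_sum: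
  assumes "finite I" shows "(\<Sum>i\<in>I. c i *\<^sub>C s i) \<in> cspan (s ` I)"
  using assms
proof (induction I rule: finite_induct)
  case empty then show ?case by (simp add: cspan_zero)
next
  case (insert i I)
  have "c i *\<^sub>C s i \<in> cspan (s ` insert i I)" by (rule cspan_base) simp
  moreover have "(\<Sum>i\<in>I. c i *\<^sub>C s i) \<in> cspan (s ` insert i I)"
    using insert.IH cspan_mono[of "s ` I" "s ` insert i I"] by blast
  ultimately show ?case using insert by (simp add: cspan_add)
qed

lemma nullv_zero: "ci.nullv w \<Longrightarrow> w = 0"
  unfolding ci.nullv_def using cinner_self_eq_0 by blast

lemma fresh1:
  assumes inf: "infinite_dimensional TYPE('a::complex_hilbert)" and fin: "finite (A :: 'a set)"
  shows "\<exists>v. norm v = 1 \<and> (\<forall>a\<in>A. cinner a v = 0)"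
proof -
  obtain vs where vs: "set vs = A" using finite_list[OF fin] by blast
  have "ci.on (\<lambda>_. 0) 0" unfolding ci.on_def by simp
  from ci.gs[OF this, of vs] obtain g k where g: "ci.on g k" "\<forall>v\<in>set vs. ci.nullv (v - ci.proj g k v)"
    by blast
  have aproj: "a = ci.proj g k a" if "a \<in> A" for a
    using g(2) vs that nullv_zero by fastforce
  have "cspan (g ` {..<k}) \<noteq> UNIV" using inf unfolding infinite_dimensional_def by blast
  then obtain v0 where v0: "v0 \<notin> cspan (g ` {..<k})" by blast
  define r where "r = v0 - ci.proj g k v0"
  have "r \<noteq> 0"
  proof
    assume "r = 0"
    then have "v0 = (\<Sum>i\<in>{..<k}. cinner v0 (g i) *\<^sub>C g i)" unfolding r_def ci.proj_def by simp
    then show False using v0 cspan_sum[of "{..<k}" "\<lambda>i. cinner v0 (g i)" g] by simp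
  qed
  have rg: "cinner (g j) r = 0" if "j < k" for j
  proof -
    have "cinner r (g j) = 0" unfolding r_def using ci.proj_inner[OF g(1) that] by (simp add: cinner_diff_left)
    then show ?thesis using cinner_commute[of "g j" r] by simp
  qed
  have ar: "cinner a r = 0" if "a \<in> A" for a
  proof -
    have "cinner a r = cinner (ci.proj g k a) r" using aproj[OF that] by simp
    also have "\<dots> = 0" unfolding ci.proj_def by (simp add: cinner_sum_left cinner_scaleC_left rg)
    finally show ?thesis .
  qed
  define v where "v = complex_of_real (1 / norm r) *\<^sub>C r"
  have "norm v = 1" unfolding v_def using \<open>r \<noteq> 0\<close> by (simp add: norm_scaleC norm_divide)
  moreover have "\<forall>a\<in>A. cinner a v = 0" unfolding v_def using ar by (simp add: cinner_scaleC_right)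
  ultimately show ?thesis by blast
qed

lemma fresh:
  assumes inf: "infinite_dimensional TYPE('a::complex_hilbert)" and fin: "finite (A :: 'a set)"
    and finK: "finite K"
  shows "\<exists>\<phi>. orthon \<phi> K \<and> (\<forall>i\<in>K. \<forall>a\<in>A. cinner a (\<phi> i) = 0)"
  using finK
proof (induction K rule: finite_induct)
  case empty then show ?case by (simp add: orthon_def)
next
  case (insert k K)
  obtain \<phi> where \<phi>: "orthon \<phi> K" "\<forall>i\<in>K. \<forall>a\<in>A. cinner a (\<phi> i) = 0" using insert.IH by blast
  obtain v where v: "norm v = 1" "\<forall>a\<in>A \<union> \<phi> ` K. cinner a v = 0"
    using fresh1[OF inf, of "A \<union> \<phi> ` K"] fin insert.hyps(1) by blast
  define \<psi> where "\<psi> = \<phi>(k := v)"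
  have vv: "cinner v v = 1" using v(1) by (simp add: cinner_self_norm)
  have "orthon \<psi> (insert k K)"
    unfolding orthon_def
  proof (intro ballI)
    fix i j assume ij: "i \<in> insert k K" "j \<in> insert k K"
    show "cinner (\<psi> i) (\<psi> j) = (if i = j then 1 else 0)"
    proof (cases "i = k")
      case True
      then show ?thesis using ij v(2) vv insert.hyps(2) cinner_commute[of v "\<phi> j"] unfolding \<psi>_def
        by (cases "j = k") auto
    next
      case False
      then show ?thesis using ij v(2) \<phi>(1) insert.hyps(2) unfolding \<psi>_def orthon_def
        by (cases "j = k") auto
    qed
  qed
  moreover have "\<forall>i\<in>insert k K. \<forall>a\<in>A. cinner a (\<psi> i) = 0"
    using \<phi>(2) v(2) insert.hyps(2) unfolding \<psi>_def by auto
  ultimately show ?case by blast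
qed




definition opr :: "('i \<Rightarrow> 'a::complex_hilbert) \<Rightarrow> ('i \<Rightarrow> 'a) \<Rightarrow> 'i set \<Rightarrow> 'a \<Rightarrow> 'a" where
  "opr b s I u = (\<Sum>i\<in>I. cinner u (b i) *\<^sub>C s i)"

definition Span :: "('i \<Rightarrow> 'a::complex_hilbert) \<Rightarrow> 'i set \<Rightarrow> 'a set" where
  "Span b L = {v. \<exists>c. v = (\<Sum>p\<in>L. c p *\<^sub>C b p)}"

lemma Span_add: "u \<in> Span b L \<Longrightarrow> v \<in> Span b L \<Longrightarrow> u + v \<in> Span b L"
  unfolding Span_def
proof clarify
  fix c c' show "\<exists>c''. (\<Sum>p\<in>L. c p *\<^sub>C b p) + (\<Sum>p\<in>L. c' p *\<^sub>C b p) = (\<Sum>p\<in>L. c'' p *\<^sub>C b p)"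
    by (rule exI[of _ "\<lambda>p. c p + c' p"]) (simp add: scaleC_add_left sum.distrib)
qed

lemma Span_scale: "u \<in> Span b L \<Longrightarrow> a *\<^sub>C u \<in> Span b L"
  unfolding Span_def
proof clarify
  fix c show "\<exists>c''. a *\<^sub>C (\<Sum>p\<in>L. c p *\<^sub>C b p) = (\<Sum>p\<in>L. c'' p *\<^sub>C b p)"
    by (rule exI[of _ "\<lambda>p. a * c p"]) (simp add: scaleC_sum_right scaleC_scaleC)
qed

lemma Span_zero: "0 \<in> Span b L"
  unfolding Span_def by (rule CollectI, rule exI[of _ "\<lambda>_. 0"]) simp

lemma Span_base: assumes "finite L" "q \<in> L" shows "b q \<in> Span b L"
proof -
  have "(\<Sum>p\<in>L. (if p = q then 1 else 0) *\<^sub>C b p) = (\<Sum>p\<in>L. if p = q then b q else 0)"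
    by (intro sum.cong) (auto simp: scaleC_one)
  also have "\<dots> = b q" using assms by simp
  finally have "b q = (\<Sum>p\<in>L. (if p = q then 1 else 0) *\<^sub>C b p)" by simp
  then have "\<exists>c. b q = (\<Sum>p\<in>L. c p *\<^sub>C b p)"
    by (rule exI[where x="\<lambda>p. if p = q then 1 else 0"])
  then show ?thesis unfolding Span_def by simp
qed

lemma Span_sum: "(\<And>i. i \<in> A \<Longrightarrow> f i \<in> Span b L) \<Longrightarrow> (\<Sum>i\<in>A. f i) \<in> Span b L"
proof (induction A rule: infinite_finite_induct)
  case (infinite A) then show ?case by (simp add: Span_zero)
next
  case empty then show ?case by (simp add: Span_zero)
next
  case (insert i A) then show ?case by (simp add: Span_add)
qed

lemma Span_mono: assumes "finite L'" "L \<subseteq> L'" shows "Span b L \<subseteq> Span b L'"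
proof
  fix v assume "v \<in> Span b L"
  then obtain c where v: "v = (\<Sum>p\<in>L. c p *\<^sub>C b p)" unfolding Span_def by blast
  have "v \<in> Span b L'" unfolding v
    by (rule Span_sum, rule Span_scale, rule Span_base) (use assms in auto)
  then show "v \<in> Span b L'" .
qed

context
  fixes b s :: "'i \<Rightarrow> 'a::complex_hilbert" and I :: "'i set"
  assumes ob: "orthon b I" and os: "orthon s I" and fI: "finite I"
begin

lemma opr_clinear: "clinear_op (opr b s I)"
  unfolding clinear_op_def opr_def
  by (simp add: cinner_add_left scaleC_add_left sum.distrib cinner_scaleC_left scaleC_sum_right scaleC_scaleC)

lemma opr_norm2: "(norm (opr b s I u))\<^sup>2 = (\<Sum>i\<in>I. (cmod (cinner u (b i)))\<^sup>2)"
  unfolding opr_def by (rule comb_norm2[OF os fI])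

lemma opr_le: "norm (opr b s I u) \<le> norm u"
proof -
  have "(norm (opr b s I u))\<^sup>2 \<le> (norm u)\<^sup>2" using opr_norm2 bessel[OF ob fI] by simp
  then show ?thesis by (simp add: power2_le_iff_abs_le)
qed

lemma opr_bounded: "bounded_op (opr b s I)"
  unfolding bounded_op_def using opr_clinear opr_le by (intro conjI exI[of _ 1]) auto

lemma opr_onorm: "onorm (opr b s I) \<le> 1"
  by (rule onorm_bound) (simp_all add: opr_le)

lemma opr_finite_rank: "finite_rank (opr b s I)"
  unfolding finite_rank_def
  by (rule exI[of _ "s ` I"]) (use fI cspan_sum in \<open>auto simp: opr_def\<close>)

lemma opr_comb:
  assumes "L \<subseteq> I"
  shows "opr b s I (\<Sum>p\<in>L. c p *\<^sub>C b p) = (\<Sum>p\<in>L. c p *\<^sub>C s p)"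
proof -
  have fL: "finite L" using assms fI finite_subset by blast
  define c' where "c' p = (if p \<in> L then c p else 0)" for p
  have eq: "(\<Sum>p\<in>L. c p *\<^sub>C b p) = (\<Sum>p\<in>I. c' p *\<^sub>C b p)"
    unfolding c'_def by (rule sum.mono_neutral_cong_left) (use assms fI in auto)
  have eq2: "(\<Sum>p\<in>L. c p *\<^sub>C s p) = (\<Sum>p\<in>I. c' p *\<^sub>C s p)"
    unfolding c'_def by (rule sum.mono_neutral_cong_left) (use assms fI in auto)
  show ?thesis unfolding eq eq2 opr_def using comb_inner[OF ob fI] by (intro sum.cong) auto
qed

lemma opr_Span:
  assumes "L \<subseteq> I" "v \<in> Span b L"
  shows "opr b s I v \<in> Span s L" and "norm (opr b s I v) = norm v"
proof -
  have fL: "finite L" using assms fI finite_subset by blast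
  obtain c where v: "v = (\<Sum>p\<in>L. c p *\<^sub>C b p)" using assms(2) unfolding Span_def by blast
  show "opr b s I v \<in> Span s L" unfolding v opr_comb[OF assms(1)] Span_def by blast
  have obL: "orthon b L" and osL: "orthon s L" using ob os assms(1) unfolding orthon_def by blast+
  have "(norm (opr b s I v))\<^sup>2 = (norm v)\<^sup>2"
    unfolding v opr_comb[OF assms(1)] comb_norm2[OF osL fL] comb_norm2[OF obL fL] ..
  then show "norm (opr b s I v) = norm v" by (simp add: power2_eq_iff_nonneg)
qed

end

lemma bounded_op_bl: assumes "bounded_op T" shows "bounded_linear T"
proof -
  obtain K where K: "\<forall>x. norm (T x) \<le> K * norm x" using assms unfolding bounded_op_def by blast
  show ?thesis
  proof (rule bounded_linear_intro[where K=K])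
    fix x y show "T (x + y) = T x + T y" using assms unfolding bounded_op_def clinear_op_def by blast
  next
    fix r x show "T (r *\<^sub>R x) = r *\<^sub>R T x" using assms unfolding bounded_op_def clinear_op_def
      by (simp add: scaleR_scaleC)
  next
    fix x show "norm (T x) \<le> norm x * K" using K by (simp add: mult.commute)
  qed
qed




lemma clinear_sum: assumes "clinear_op T" shows "T (\<Sum>i\<in>A. f i) = (\<Sum>i\<in>A. T (f i))"
proof (induction A rule: infinite_finite_induct)
  case (infinite A)
  have "T 0 = T (0 *\<^sub>C 0)" by simp
  also have "\<dots> = 0" using assms unfolding clinear_op_def by (metis scaleC_zero_left)
  finally show ?case using infinite by simp
next
  case empty
  have "T 0 = T (0 *\<^sub>C 0)" by simp
  also have "\<dots> = 0" using assms unfolding clinear_op_def by (metis scaleC_zero_left)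
  finally show ?case by simp
next
  case (insert i A) then show ?case using assms unfolding clinear_op_def by simp
qed

locale cons =
  fixes T :: "'a::complex_hilbert \<Rightarrow> 'a" and x :: 'a and e :: "nat \<Rightarrow> 'a" and m :: nat
    and \<phi> :: "nat \<times> nat \<Rightarrow> 'a" and N w :: nat and \<eta> :: real and Dv :: "nat \<Rightarrow> 'a" and d :: 'a
    and B :: "'a \<Rightarrow> 'a"
  assumes T_lin: "clinear_op T" and T_bd: "\<And>u. norm (T u) \<le> norm u"
    and B_def: "B = (\<lambda>u. \<Sum>k<m. cinner (T u) (e k) *\<^sub>C e k)"
    and e_on: "orthon e {..<m}" and m_pos: "0 < m"
    and e0: "x = complex_of_real (norm x) *\<^sub>C e 0" and x_nz: "x \<noteq> 0"
    and phi_on: "orthon \<phi> ({1..2*N+1} \<times> {..<w})"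
    and phi_perp: "\<And>p i. p \<in> {1..2*N+1} \<times> {..<w} \<Longrightarrow> i < m \<Longrightarrow> cinner (e i) (\<phi> p) = 0"
    and N3: "3 \<le> N" and mw: "m \<le> w"
    and eta0: "0 < \<eta>" and eta1: "\<eta> \<le> 1/2"
    and Dv_span: "\<And>i. i < m \<Longrightarrow> \<exists>c. Dv i = (\<Sum>j<w. c j *\<^sub>C \<phi> (1, j))"
    and Dv_inner: "\<And>i k. i < m \<Longrightarrow> k < m \<Longrightarrow>
        cinner (Dv i) (Dv k) = (if i = k then 1 else 0) - cinner (B (e i)) (B (e k))"
    and d_E: "d = (\<Sum>k<m. cinner d (e k) *\<^sub>C e k)"
    and d_small: "norm d \<le> \<eta> * norm x"
begin

definition "K = {1..2*N+1} \<times> {..<w}"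
definition "PE u = (\<Sum>k<m. cinner u (e k) *\<^sub>C e k)"
definition "inE v \<longleftrightarrow> v = PE v"
definition "perpF v \<longleftrightarrow> (\<forall>p\<in>K. cinner v (\<phi> p) = 0)"
definition "\<rho> = sqrt (1 - \<eta>)"
definition "c0 = sqrt \<eta> * norm x"
definition "sE i = complex_of_real \<rho> *\<^sub>C (B (e i) + Dv i) + complex_of_real (sqrt \<eta>) *\<^sub>C \<phi> (N+1, i)"
definition "coef i = - complex_of_real (\<rho> / (sqrt \<eta> * c0)) * cinner d (B (e i))"
definition "\<omega>G = (\<Sum>i<m. coef i *\<^sub>C \<phi> (N+1, i))"
definition "\<omega>EG = complex_of_real (1 / c0) *\<^sub>C d + \<omega>G"
definition "hc = sqrt (1 - (norm \<omega>EG)\<^sup>2)"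
definition "om = \<omega>EG + complex_of_real hc *\<^sub>C \<phi> (2*N, 0)"

lemma phiK: "p \<in> K \<Longrightarrow> q \<in> K \<Longrightarrow> cinner (\<phi> p) (\<phi> q) = (if p = q then 1 else 0)"
  using phi_on unfolding orthon_def K_def by blast

lemma eon: "i < m \<Longrightarrow> k < m \<Longrightarrow> cinner (e i) (e k) = (if i = k then 1 else 0)"
  using e_on unfolding orthon_def by blast

lemma phi_e: "p \<in> K \<Longrightarrow> i < m \<Longrightarrow> cinner (\<phi> p) (e i) = 0"
  using phi_perp[of p i] cinner_commute[of "\<phi> p" "e i"] unfolding K_def by simp

lemma e_phi: "p \<in> K \<Longrightarrow> i < m \<Longrightarrow> cinner (e i) (\<phi> p) = 0"
  using phi_perp[of p i] unfolding K_def by simp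

lemma rho2: "\<rho> * \<rho> = 1 - \<eta>" unfolding \<rho>_def using eta1 by simp
lemma rho_pos: "0 < \<rho>" unfolding \<rho>_def using eta1 by simp
lemma rho_le: "\<rho> \<le> 1" unfolding \<rho>_def using eta0 by simp
lemma sq_eta: "sqrt \<eta> * sqrt \<eta> = \<eta>" using eta0 by simp
lemma c0_pos: "0 < c0" unfolding c0_def using eta0 x_nz by simp

lemma B_PE: "B u = PE (T u)" unfolding B_def PE_def by simp

lemma PE_inner_e: "k < m \<Longrightarrow> cinner (PE u) (e k) = cinner u (e k)"
  unfolding PE_def using comb_inner[OF e_on, of k] by simp

lemma PE_PE: "PE (PE u) = PE u"
proof -
  have "PE (PE u) = (\<Sum>k<m. cinner (PE u) (e k) *\<^sub>C e k)" by (rule PE_def)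
  also have "\<dots> = (\<Sum>k<m. cinner u (e k) *\<^sub>C e k)" using PE_inner_e by (intro sum.cong) auto
  also have "\<dots> = PE u" by (rule PE_def[symmetric])
  finally show ?thesis .
qed

lemma inE_PE: "inE (PE u)" unfolding inE_def PE_PE ..
lemma inE_B: "inE (B u)" unfolding B_PE by (rule inE_PE)
lemma inE_d: "inE d" unfolding inE_def PE_def using d_E .

lemma inE_e: "i < m \<Longrightarrow> inE (e i)"
proof -
  assume i: "i < m"
  have "PE (e i) = (\<Sum>k<m. (if k = i then 1 else 0) *\<^sub>C e k)"
    unfolding PE_def using eon i by (intro sum.cong) auto
  also have "\<dots> = (\<Sum>k<m. if k = i then e i else 0)" by (intro sum.cong) (auto simp: scaleC_one)
  also have "\<dots> = e i" using i by simp
  finally show ?thesis unfolding inE_def by simp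
qed

lemma inE_x: "inE x"
proof -
  have "PE x = complex_of_real (norm x) *\<^sub>C PE (e 0)"
    unfolding PE_def e0[symmetric] by (subst e0) (simp add: cinner_scaleC_left scaleC_sum_right scaleC_scaleC)
  also have "PE (e 0) = e 0" using inE_e[OF m_pos] unfolding inE_def by simp
  finally show ?thesis unfolding inE_def using e0 by simp
qed

lemma PE_inner: "inE y \<Longrightarrow> cinner (PE u) y = cinner u y"
proof -
  assume y: "inE y"
  have "cinner (PE u) y = (\<Sum>k<m. cinner u (e k) * cinner (e k) y)"
    unfolding PE_def by (simp add: cinner_sum_left cinner_scaleC_left)
  also have "\<dots> = cinner u (PE y)"
    unfolding PE_def by (simp add: cinner_sum_right cinner_scaleC_right, intro sum.cong refl)
      (metis cinner_commute mult.commute)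
  finally show ?thesis using y unfolding inE_def by simp
qed

lemma inE_phi: "inE y \<Longrightarrow> p \<in> K \<Longrightarrow> cinner y (\<phi> p) = 0"
proof -
  assume "inE y" "p \<in> K"
  then have "cinner y (\<phi> p) = cinner (PE y) (\<phi> p)" unfolding inE_def by simp
  also have "\<dots> = 0" unfolding PE_def using e_phi[OF \<open>p \<in> K\<close>]
    by (simp add: cinner_sum_left cinner_scaleC_left)
  finally show ?thesis .
qed

lemma phi_inE: "inE y \<Longrightarrow> p \<in> K \<Longrightarrow> cinner (\<phi> p) y = 0"
  using inE_phi cinner_commute by (metis complex_cnj_zero)

lemma Dv_phi: "i < m \<Longrightarrow> q \<in> K \<Longrightarrow> fst q \<noteq> 1 \<Longrightarrow> cinner (Dv i) (\<phi> q) = 0"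
proof -
  assume i: "i < m" and q: "q \<in> K" "fst q \<noteq> 1"
  obtain c where c: "Dv i = (\<Sum>j<w. c j *\<^sub>C \<phi> (1, j))" using Dv_span[OF i] by blast
  have "cinner (Dv i) (\<phi> q) = (\<Sum>j<w. c j * cinner (\<phi> (1, j)) (\<phi> q))"
    unfolding c by (simp add: cinner_sum_left cinner_scaleC_left)
  also have "\<dots> = 0"
  proof (intro sum.neutral ballI)
    fix j assume "j \<in> {..<w}"
    then have "(1, j) \<in> K" using N3 unfolding K_def by auto
    then show "c j * cinner (\<phi> (1, j)) (\<phi> q) = 0" using phiK q by auto
  qed
  finally show ?thesis .
qed

lemma phi_Dv: "i < m \<Longrightarrow> q \<in> K \<Longrightarrow> fst q \<noteq> 1 \<Longrightarrow> cinner (\<phi> q) (Dv i) = 0"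
  using Dv_phi cinner_commute by (metis complex_cnj_zero)

lemma Dv_inE: "i < m \<Longrightarrow> inE y \<Longrightarrow> cinner (Dv i) y = 0"
proof -
  assume i: "i < m" and y: "inE y"
  obtain c where c: "Dv i = (\<Sum>j<w. c j *\<^sub>C \<phi> (1, j))" using Dv_span[OF i] by blast
  have "cinner (Dv i) y = (\<Sum>j<w. c j * cinner (\<phi> (1, j)) y)"
    unfolding c by (simp add: cinner_sum_left cinner_scaleC_left)
  also have "\<dots> = 0"
  proof (intro sum.neutral ballI)
    fix j assume "j \<in> {..<w}"
    then have "(1, j) \<in> K" using N3 unfolding K_def by auto
    then show "c j * cinner (\<phi> (1, j)) y = 0" using phi_inE[OF y] by simp
  qed
  finally show ?thesis .
qed

lemma inE_Dv: "i < m \<Longrightarrow> inE y \<Longrightarrow> cinner y (Dv i) = 0"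
  using Dv_inE cinner_commute by (metis complex_cnj_zero)

lemma T_sum: "T (\<Sum>i\<in>A. f i) = (\<Sum>i\<in>A. T (f i))" by (rule clinear_sum[OF T_lin])
lemma T_scale: "T (c *\<^sub>C u) = c *\<^sub>C T u" using T_lin unfolding clinear_op_def by blast
lemma B_sum: "B (\<Sum>i\<in>A. f i) = (\<Sum>i\<in>A. B (f i))"
  unfolding B_def T_sum by (simp add: cinner_sum_left scaleC_sum_left sum.swap[of _ A])
lemma B_scale: "B (c *\<^sub>C u) = c *\<^sub>C B u"
  unfolding B_def T_scale by (simp add: cinner_scaleC_left scaleC_sum_right scaleC_scaleC)

lemma PE_norm: "norm (PE u) \<le> norm u"
proof -
  have "(norm (PE u))\<^sup>2 = (\<Sum>k<m. (cmod (cinner u (e k)))\<^sup>2)"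
    unfolding PE_def by (rule comb_norm2[OF e_on]) simp
  also have "\<dots> \<le> (norm u)\<^sup>2" by (rule bessel[OF e_on]) simp
  finally show ?thesis by (simp add: power2_le_iff_abs_le)
qed

lemma B_norm: "norm (B u) \<le> norm u"
  unfolding B_PE using PE_norm[of "T u"] T_bd[of u] by linarith

end




lemma pyth: assumes "cinner u v = 0" shows "(norm (u + v))\<^sup>2 = (norm u)\<^sup>2 + (norm v)\<^sup>2"
proof -
  have vu: "cinner v u = 0" using assms cinner_commute[of v u] by simp
  show ?thesis unfolding norm_sq_cinner
    by (simp add: cinner_add_left cinner_add_right assms vu)
qed

context cons begin

lemma w_pos: "0 < w" using m_pos mw by simp

lemma inK: "1 \<le> k \<Longrightarrow> k \<le> 2*N+1 \<Longrightarrow> i < w \<Longrightarrow> (k, i) \<in> K"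
  unfolding K_def by simp

lemma sE_inner_l: "cinner (sE i) y = complex_of_real \<rho> * (cinner (B (e i)) y + cinner (Dv i) y)
    + complex_of_real (sqrt \<eta>) * cinner (\<phi> (N+1, i)) y"
  by (simp add: sE_def cinner_add_left cinner_scaleC_left)

lemma sE_inner_r: "cinner y (sE i) = complex_of_real \<rho> * (cinner y (B (e i)) + cinner y (Dv i))
    + complex_of_real (sqrt \<eta>) * cinner y (\<phi> (N+1, i))"
  by (simp add: sE_def cinner_add_right cinner_scaleC_right)

lemma NK1: "i < m \<Longrightarrow> (N+1, i) \<in> K" using mw by (intro inK) auto

lemma sE_sE: assumes "i < m" "k < m" shows "cinner (sE i) (sE k) = (if i = k then 1 else 0)"
proof -
  have Ni: "(N+1, i) \<in> K" and Nk: "(N+1, k) \<in> K" using NK1 assms by auto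
  have a: "cinner (B (e i)) (sE k) = complex_of_real \<rho> * cinner (B (e i)) (B (e k))"
    unfolding sE_inner_r using inE_Dv[OF assms(2) inE_B] inE_phi[OF inE_B Nk] by simp
  have b: "cinner (Dv i) (sE k) = complex_of_real \<rho> * cinner (Dv i) (Dv k)"
    unfolding sE_inner_r using Dv_inE[OF assms(1) inE_B] Dv_phi[OF assms(1) Nk] N3 by simp
  have c: "cinner (\<phi> (N+1, i)) (sE k) = complex_of_real (sqrt \<eta>) * (if i = k then 1 else 0)"
    unfolding sE_inner_r using phi_inE[OF inE_B Ni] phi_Dv[OF assms(2) Ni] phiK[OF Ni Nk] N3 by simp
  have "cinner (sE i) (sE k) = complex_of_real \<rho> * (complex_of_real \<rho> * cinner (B (e i)) (B (e k))
        + complex_of_real \<rho> * cinner (Dv i) (Dv k))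
       + complex_of_real (sqrt \<eta>) * (complex_of_real (sqrt \<eta>) * (if i = k then 1 else 0))"
    by (simp only: sE_inner_l a b c)
  also have "\<dots> = complex_of_real (\<rho> * \<rho>) * (cinner (B (e i)) (B (e k)) + cinner (Dv i) (Dv k))
       + complex_of_real (sqrt \<eta> * sqrt \<eta>) * (if i = k then 1 else 0)"
    by (simp only: of_real_mult) (simp add: algebra_simps)
  also have "\<dots> = complex_of_real (1 - \<eta>) * (if i = k then 1 else 0) + complex_of_real \<eta> * (if i = k then 1 else 0)"
    unfolding rho2 sq_eta Dv_inner[OF assms] by simp
  also have "\<dots> = (if i = k then 1 else 0)" by (simp add: algebra_simps)
  finally show ?thesis .
qed

lemma sE_phi: assumes "i < m" "q \<in> K" "fst q \<noteq> 1" "fst q \<noteq> N+1"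
  shows "cinner (sE i) (\<phi> q) = 0"
proof -
  have "(N+1, i) \<noteq> q" using assms by auto
  then show ?thesis unfolding sE_inner_l
    using inE_phi[OF inE_B assms(2)] Dv_phi[OF assms(1,2,3)] phiK[OF NK1[OF assms(1)] assms(2)] by simp
qed

lemma dB: "(\<Sum>i<m. (cmod (cinner d (B (e i))))\<^sup>2) \<le> (norm d)\<^sup>2"
proof -
  define c where "c i = cinner d (B (e i))" for i
  define v where "v = (\<Sum>i<m. c i *\<^sub>C e i)"
  define S2 where "S2 = (\<Sum>i<m. (cmod (c i))\<^sup>2)"
  have S20: "0 \<le> S2" unfolding S2_def by (simp add: sum_nonneg)
  have nv: "(norm v)\<^sup>2 = S2" unfolding v_def S2_def by (rule comb_norm2[OF e_on]) simp
  have "cinner (B v) d = (\<Sum>i<m. c i * cinner (B (e i)) d)"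
    unfolding v_def B_sum B_scale by (simp add: cinner_sum_left cinner_scaleC_left)
  also have "\<dots> = (\<Sum>i<m. complex_of_real ((cmod (c i))\<^sup>2))"
    unfolding c_def by (intro sum.cong refl) (simp add: cinner_commute[of "B (e _)" d] cnj_self2)
  finally have Bvd: "cinner (B v) d = complex_of_real S2" unfolding S2_def by simp
  have "S2 \<le> norm (B v) * norm d" using cauchy_schwarz[of "B v" d] Bvd S20 by simp
  also have "\<dots> \<le> norm v * norm d" by (rule mult_right_mono[OF B_norm norm_ge_zero])
  moreover have "sqrt S2 = norm v"
  proof -
    have "sqrt S2 = sqrt ((norm v)\<^sup>2)" using nv by simp
    then show ?thesis by simp
  qed
  ultimately have h: "S2 \<le> sqrt S2 * norm d" by simp
  have "sqrt S2 \<le> norm d"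
  proof (cases "S2 = 0")
    case True then show ?thesis by simp
  next
    case False
    then have "0 < sqrt S2" using S20 by simp
    moreover have "sqrt S2 * sqrt S2 \<le> sqrt S2 * norm d" using h S20 by simp
    ultimately show ?thesis by (meson mult_left_le_imp_le)
  qed
  then have "(sqrt S2)\<^sup>2 \<le> (norm d)\<^sup>2" by (rule power_mono) (use S20 in simp)
  then have "S2 \<le> (norm d)\<^sup>2" using S20 by simp
  then show ?thesis unfolding S2_def c_def .
qed

lemma phiN1_on: "orthon (\<lambda>i. \<phi> (N+1, i)) {..<m}"
  unfolding orthon_def using phiK NK1 by auto

lemma d_perp: "p \<in> K \<Longrightarrow> cinner d (\<phi> p) = 0" by (rule inE_phi[OF inE_d])

lemma omG_norm: "(norm \<omega>G)\<^sup>2 = (\<Sum>i<m. (cmod (coef i))\<^sup>2)"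
  unfolding \<omega>G_def by (rule comb_norm2[OF phiN1_on]) simp

lemma omEG_le: "(norm \<omega>EG)\<^sup>2 \<le> 1"
proof -
  have "cinner (complex_of_real (1 / c0) *\<^sub>C d) \<omega>G = 0"
    unfolding \<omega>G_def using d_perp NK1 by (simp add: cinner_sum_right cinner_scaleC_right cinner_scaleC_left)
  then have p1: "(norm \<omega>EG)\<^sup>2 = (norm (complex_of_real (1 / c0) *\<^sub>C d))\<^sup>2 + (norm \<omega>G)\<^sup>2"
    unfolding \<omega>EG_def by (rule pyth)
  have p2: "(norm (complex_of_real (1 / c0) *\<^sub>C d))\<^sup>2 = (norm d)\<^sup>2 / c0\<^sup>2"
    using c0_pos by (simp add: norm_scaleC norm_divide power_divide)
  have "(norm \<omega>G)\<^sup>2 = (\<rho> / (sqrt \<eta> * c0))\<^sup>2 * (\<Sum>i<m. (cmod (cinner d (B (e i))))\<^sup>2)"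
    unfolding omG_norm coef_def sum_distrib_left using rho_pos eta0 c0_pos
    by (intro sum.cong refl) (simp add: norm_mult norm_divide power_mult_distrib power_divide)
  also have "\<dots> \<le> (\<rho> / (sqrt \<eta> * c0))\<^sup>2 * (norm d)\<^sup>2"
    by (rule mult_left_mono[OF dB]) simp
  also have "(\<rho> / (sqrt \<eta> * c0))\<^sup>2 * (norm d)\<^sup>2 = (1 - \<eta>) / \<eta> * ((norm d)\<^sup>2 / c0\<^sup>2)"
    using eta0 c0_pos rho2 by (simp add: power_divide power_mult_distrib power2_eq_square)
  finally have p3: "(norm \<omega>G)\<^sup>2 \<le> (1 - \<eta>) / \<eta> * ((norm d)\<^sup>2 / c0\<^sup>2)" .
  have h0: "(norm \<omega>EG)\<^sup>2 \<le> (norm d)\<^sup>2 / c0\<^sup>2 + (1 - \<eta>) / \<eta> * ((norm d)\<^sup>2 / c0\<^sup>2)"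
    using p1 p2 p3 by linarith
  have "(norm d)\<^sup>2 / c0\<^sup>2 + (1 - \<eta>) / \<eta> * ((norm d)\<^sup>2 / c0\<^sup>2) = (norm d)\<^sup>2 / c0\<^sup>2 / \<eta>"
    using eta0 c0_pos by (simp add: field_simps)
  with h0 have h: "(norm \<omega>EG)\<^sup>2 \<le> (norm d)\<^sup>2 / c0\<^sup>2 / \<eta>" by simp
  have "(norm d)\<^sup>2 \<le> (\<eta> * norm x)\<^sup>2" using d_small by (simp add: power_mono)
  also have "\<dots> = \<eta> * c0\<^sup>2" unfolding c0_def using eta0 by (simp add: power_mult_distrib power2_eq_square)
  finally have "(norm d)\<^sup>2 / c0\<^sup>2 / \<eta> \<le> 1" using eta0 c0_pos by (simp add: field_simps)
  then show ?thesis using h by linarith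
qed

lemma NK2: "(2*N, 0) \<in> K" using w_pos N3 by (intro inK) auto

lemma omEG_phi2: "cinner \<omega>EG (\<phi> (2*N, 0)) = 0"
proof -
  have "cinner (\<phi> (N+1, i)) (\<phi> (2*N, 0)) = 0" if "i < m" for i
    using phiK[OF NK1[OF that] NK2] N3 by auto
  then show ?thesis unfolding \<omega>EG_def \<omega>G_def using d_perp[OF NK2]
    by (simp add: cinner_add_left cinner_sum_left cinner_scaleC_left)
qed

lemma om_unit: "cinner om om = 1"
proof -
  have "(norm om)\<^sup>2 = (norm \<omega>EG)\<^sup>2 + (norm (complex_of_real hc *\<^sub>C \<phi> (2*N, 0)))\<^sup>2"
    unfolding om_def by (rule pyth) (simp add: cinner_scaleC_right omEG_phi2)
  also have "norm (\<phi> (2*N, 0)) = 1"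
  proof -
    have "complex_of_real ((norm (\<phi> (2*N, 0)))\<^sup>2) = 1"
      using phiK[OF NK2 NK2] cinner_self_norm[of "\<phi> (2*N, 0)"] by simp
    then have "(norm (\<phi> (2*N, 0)))\<^sup>2 = 1" by (simp only: of_real_eq_1_iff)
    then show ?thesis using norm_ge_zero[of "\<phi> (2*N, 0)"] by (simp add: power2_eq_1_iff)
  qed
  then have "(norm (complex_of_real hc *\<^sub>C \<phi> (2*N, 0)))\<^sup>2 = hc\<^sup>2" by (simp add: norm_scaleC)
  also have "hc\<^sup>2 = 1 - (norm \<omega>EG)\<^sup>2" unfolding hc_def using omEG_le by simp
  finally have "(norm om)\<^sup>2 = 1" by simp
  then show ?thesis by (simp add: cinner_self_norm)
qed

lemma inner_omG: "cinner y \<omega>G = (\<Sum>k<m. cnj (coef k) * cinner y (\<phi> (N+1, k)))"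
  unfolding \<omega>G_def by (simp add: cinner_sum_right cinner_scaleC_right)

lemma inner_om: "cinner y om = complex_of_real (1 / c0) * cinner y d + cinner y \<omega>G + complex_of_real hc * cinner y (\<phi> (2*N, 0))"
  unfolding om_def \<omega>EG_def by (simp add: cinner_add_right cinner_scaleC_right)

lemma sE_om: assumes "i < m" shows "cinner (sE i) om = 0"
proof -
  have Ni: "(N+1, i) \<in> K" using NK1 assms by auto
  have a: "cinner (B (e i)) om = complex_of_real (1 / c0) * cinner (B (e i)) d"
    unfolding inner_om inner_omG using inE_phi[OF inE_B] NK1 NK2 by simp
  have b: "cinner (Dv i) om = 0"
    unfolding inner_om inner_omG using Dv_inE[OF assms inE_d] Dv_phi[OF assms] NK1 NK2 N3 by simp
  have c: "cinner (\<phi> (N+1, i)) om = cnj (coef i)"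
  proof -
    have "cinner (\<phi> (N+1, i)) \<omega>G = (\<Sum>k<m. if k = i then cnj (coef i) else 0)"
      unfolding inner_omG using phiK[OF Ni] NK1 by (intro sum.cong) auto
    also have "\<dots> = cnj (coef i)" using assms by simp
    finally show ?thesis unfolding inner_om using phi_inE[OF inE_d Ni] phiK[OF Ni NK2] N3 by simp
  qed
  have cc: "cnj (coef i) = - complex_of_real (\<rho> / (sqrt \<eta> * c0)) * cinner (B (e i)) d"
    unfolding coef_def using cinner_commute[of "B (e i)" d] by simp
  have "cinner (sE i) om = complex_of_real (\<rho> / c0) * cinner (B (e i)) d
      - complex_of_real (sqrt \<eta> * (\<rho> / (sqrt \<eta> * c0))) * cinner (B (e i)) d"
    unfolding sE_inner_l a b c cc by (simp add: algebra_simps)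
  also have "sqrt \<eta> * (\<rho> / (sqrt \<eta> * c0)) = \<rho> / c0" using eta0 by simp
  finally show ?thesis by simp
qed

lemma om_phi: assumes "q \<in> K" "fst q \<noteq> N+1" "fst q \<noteq> 2*N" shows "cinner om (\<phi> q) = 0"
proof -
  have "cinner \<omega>G (\<phi> q) = 0"
    unfolding \<omega>G_def using phiK[OF NK1 assms(1)] assms(2)
    by (auto simp: cinner_sum_left cinner_scaleC_left intro!: sum.neutral)
  moreover have "cinner (\<phi> (2*N, 0)) (\<phi> q) = 0" using phiK[OF NK2 assms(1)] assms(3) by auto
  ultimately show ?thesis unfolding om_def \<omega>EG_def using d_perp[OF assms(1)]
    by (simp add: cinner_add_left cinner_scaleC_left)
qed

end



context cons begin

definition "I = {0} \<times> {..<m} \<union> {1..N-1} \<times> {..<w} \<union> {N+1..2*N-1} \<times> {..<w}"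
definition "bb p = (if fst p = 0 then e (snd p) else \<phi> p)"
definition "\<sigma> p = (if fst p = 2*N-1 then (2*N+1, snd p) else (fst p + 1, snd p))"
definition "ss p = (if fst p = 0 then sE (snd p) else if p = (2*N-1, 0) then om else \<phi> (\<sigma> p))"
definition "S = opr bb ss I"

definition "regI p \<longleftrightarrow> p \<in> I \<and> fst p \<noteq> 0 \<and> p \<noteq> (2*N-1, 0)"

lemma finI: "finite I" unfolding I_def by simp

lemma I_E: "p \<in> I \<Longrightarrow> fst p = 0 \<Longrightarrow> snd p < m" unfolding I_def by auto

lemma I_K: "p \<in> I \<Longrightarrow> fst p \<noteq> 0 \<Longrightarrow> p \<in> K"
  unfolding I_def K_def using N3 by auto

lemma spec_I: "(2*N-1, 0) \<in> I" unfolding I_def using N3 w_pos by auto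

lemma sigma_K: "regI p \<Longrightarrow> \<sigma> p \<in> K"
  unfolding regI_def I_def K_def \<sigma>_def using N3 by auto

lemma sigma_fst: "regI p \<Longrightarrow> fst (\<sigma> p) \<noteq> 1 \<and> fst (\<sigma> p) \<noteq> N+1 \<and> fst (\<sigma> p) \<noteq> 2*N"
  unfolding regI_def I_def \<sigma>_def using N3 by auto

lemma sigma_inj: "regI p \<Longrightarrow> regI q \<Longrightarrow> \<sigma> p = \<sigma> q \<Longrightarrow> p = q"
  unfolding regI_def I_def \<sigma>_def using N3 by (auto simp: prod_eq_iff split: if_splits)

lemma orthon_bb: "orthon bb I"
  unfolding orthon_def
proof (intro ballI)
  fix p q assume p: "p \<in> I" and q: "q \<in> I"
  show "cinner (bb p) (bb q) = (if p = q then 1 else 0)"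
  proof (cases "fst p = 0")
    case True
    note pE = I_E[OF p True]
    show ?thesis
    proof (cases "fst q = 0")
      case True
      then show ?thesis using pE I_E[OF q True] \<open>fst p = 0\<close> eon unfolding bb_def
        by (auto simp: prod_eq_iff)
    next
      case False
      then show ?thesis using e_phi[OF I_K[OF q False] pE] \<open>fst p = 0\<close> unfolding bb_def by auto
    qed
  next
    case False
    note pK = I_K[OF p False]
    show ?thesis
    proof (cases "fst q = 0")
      case True
      then show ?thesis using phi_e[OF pK I_E[OF q True]] \<open>fst p \<noteq> 0\<close> unfolding bb_def by auto
    next
      case False
      then show ?thesis using phiK[OF pK I_K[OF q False]] \<open>fst p \<noteq> 0\<close> unfolding bb_def by auto
    qed
  qed
qed

lemma ss_E: "fst p = 0 \<Longrightarrow> ss p = sE (snd p)" unfolding ss_def by simp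
lemma ss_spec: "ss (2*N-1, 0) = om" unfolding ss_def using N3 by simp
lemma ss_reg: "regI p \<Longrightarrow> ss p = \<phi> (\<sigma> p)" unfolding ss_def regI_def by simp

lemma sym0: "cinner a b = 0 \<Longrightarrow> cinner b a = 0"
  using cinner_commute[of b a] by simp

lemma orthon_ss: "orthon ss I"
  unfolding orthon_def
proof (intro ballI)
  fix p q assume p: "p \<in> I" and q: "q \<in> I"
  have cases: "\<And>r. r \<in> I \<Longrightarrow> fst r = 0 \<or> r = (2*N-1, 0) \<or> regI r" unfolding regI_def by auto
  have spE: "fst (2*N-1, 0) \<noteq> 0" using N3 by simp
  show "cinner (ss p) (ss q) = (if p = q then 1 else 0)"
  proof -
    consider "fst p = 0" | "p = (2*N-1, 0)" | "regI p" using cases[OF p] by (elim disjE) auto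
    then show ?thesis
    proof cases
      case 1
      note pm = I_E[OF p 1]
      consider "fst q = 0" | "q = (2*N-1, 0)" | "regI q" using cases[OF q] by (elim disjE) auto
      then show ?thesis
      proof cases
        case 1
        then show ?thesis using \<open>fst p = 0\<close> pm I_E[OF q 1] sE_sE ss_E by (auto simp: prod_eq_iff)
      next
        case 2
        then show ?thesis using \<open>fst p = 0\<close> ss_E ss_spec sE_om[OF pm] spE by auto
      next
        case 3
        then show ?thesis using \<open>fst p = 0\<close> ss_E ss_reg sE_phi[OF pm sigma_K] sigma_fst
          by (auto simp: regI_def)
      qed
    next
      case 2
      consider "fst q = 0" | "q = (2*N-1, 0)" | "regI q" using cases[OF q] by (elim disjE) auto
      then show ?thesis
      proof cases
        case 1
        then show ?thesis using \<open>p = _\<close> ss_E ss_spec sym0[OF sE_om[OF I_E[OF q 1]]] spE by auto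
      next
        case 2
        then show ?thesis using \<open>p = _\<close> ss_spec om_unit by simp
      next
        case 3
        then show ?thesis using \<open>p = _\<close> ss_spec ss_reg om_phi[OF sigma_K] sigma_fst
          by (auto simp: regI_def)
      qed
    next
      case 3
      consider "fst q = 0" | "q = (2*N-1, 0)" | "regI q" using cases[OF q] by (elim disjE) auto
      then show ?thesis
      proof cases
        case 1
        then show ?thesis using \<open>regI p\<close> ss_E ss_reg sym0[OF sE_phi[OF I_E[OF q 1] sigma_K]] sigma_fst
          by (auto simp: regI_def)
      next
        case 2
        then show ?thesis using \<open>regI p\<close> ss_spec ss_reg sym0[OF om_phi[OF sigma_K]] sigma_fst
          by (auto simp: regI_def)
      next
        case 3
        then show ?thesis using \<open>regI p\<close> ss_reg phiK[OF sigma_K sigma_K] sigma_inj by auto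
      qed
    qed
  qed
qed

lemma S_bounded: "bounded_op S" unfolding S_def by (rule opr_bounded[OF orthon_bb orthon_ss finI])
lemma S_onorm: "onorm S \<le> 1" unfolding S_def by (rule opr_onorm[OF orthon_bb orthon_ss finI])
lemma S_fr: "finite_rank S" unfolding S_def by (rule opr_finite_rank[OF orthon_bb orthon_ss finI])

end



context cons begin

lemma S_base: "p \<in> I \<Longrightarrow> S (bb p) = ss p"
  using opr_comb[OF orthon_bb orthon_ss finI, of "{p}" "\<lambda>_. 1"] unfolding S_def by (simp add: scaleC_one)

lemma S_clinear: "clinear_op S" unfolding S_def by (rule opr_clinear[OF orthon_bb orthon_ss finI])

lemma S_scale: "S (c *\<^sub>C u) = c *\<^sub>C S u" using S_clinear unfolding clinear_op_def by blast

lemma E00: "(0, 0) \<in> I" unfolding I_def using m_pos by auto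

lemma x_bb: "x = complex_of_real (norm x) *\<^sub>C bb (0, 0)" using e0 unfolding bb_def by simp

lemma S_x: "S x = complex_of_real (norm x) *\<^sub>C sE 0"
  by (subst x_bb) (simp add: S_scale S_base[OF E00] ss_E)

lemma S_inner: "cinner (S v) y = (\<Sum>p\<in>I. cinner v (bb p) * cinner (ss p) y)"
  unfolding S_def opr_def by (simp add: cinner_sum_left cinner_scaleC_left)

definition "R = {p \<in> I. regI p}"

lemma I_split: "(\<Sum>p\<in>I. h p) = (\<Sum>i<m. h (0, i)) + h (2*N-1, 0) + (\<Sum>p\<in>R. h p)"
proof -
  have Ieq: "I = ((\<lambda>i. (0, i)) ` {..<m}) \<union> ({(2*N-1, 0)} \<union> R)"
    unfolding R_def regI_def using spec_I by (auto simp: I_def)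
  have fR: "finite R" unfolding R_def using finI by simp
  have d1: "((\<lambda>i. (0::nat, i)) ` {..<m}) \<inter> ({(2*N-1, 0)} \<union> R) = {}"
    unfolding R_def regI_def using N3 by auto
  have d2: "{(2*N-1, 0)} \<inter> R = {}" unfolding R_def regI_def by auto
  have "(\<Sum>p\<in>I. h p) = (\<Sum>p\<in>(\<lambda>i. (0, i)) ` {..<m}. h p) + (\<Sum>p\<in>{(2*N-1, 0)} \<union> R. h p)"
    unfolding Ieq by (rule sum.union_disjoint) (use fR d1 in auto)
  also have "(\<Sum>p\<in>(\<lambda>i. (0, i)) ` {..<m}. h p) = (\<Sum>i<m. h (0, i))"
    by (rule sum.reindex_cong[where l="\<lambda>i. (0, i)"]) (auto simp: inj_on_def)
  also have "(\<Sum>p\<in>{(2*N-1, 0)} \<union> R. h p) = h (2*N-1, 0) + (\<Sum>p\<in>R. h p)"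
    by (subst sum.union_disjoint) (use fR d2 in auto)
  finally show ?thesis by (simp add: add.assoc)
qed

lemma shift: assumes K': "N+2 \<le> k" "k \<le> 2*N-1"
  shows "cinner (S v) (\<phi> (k, 0)) = cinner v (\<phi> (k-1, 0))"
proof -
  have kK: "(k, 0) \<in> K" using K' w_pos N3 by (intro inK) auto
  have a: "cinner (ss (0, i)) (\<phi> (k, 0)) = 0" if "i < m" for i
    using sE_phi[OF that kK] K' ss_E by simp
  have b: "cinner (ss (2*N-1, 0)) (\<phi> (k, 0)) = 0"
    using om_phi[OF kK] K' ss_spec by simp
  have rk: "regI (k-1, 0)" unfolding regI_def I_def using K' w_pos N3 by auto
  have c: "cinner (ss p) (\<phi> (k, 0)) = (if p = (k-1, 0) then 1 else 0)" if "p \<in> R" for p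
  proof -
    have rp: "regI p" using that unfolding R_def by simp
    have "\<sigma> p = (k, 0) \<longleftrightarrow> p = (k-1, 0)"
      using rp K' N3 unfolding regI_def I_def \<sigma>_def by (auto simp: prod_eq_iff)
    then show ?thesis using ss_reg[OF rp] phiK[OF sigma_K[OF rp] kK] by auto
  qed
  have "cinner (S v) (\<phi> (k, 0)) = (\<Sum>p\<in>R. cinner v (bb p) * (if p = (k-1, 0) then 1 else 0))"
    unfolding S_inner I_split using a b c by simp
  also have "\<dots> = cinner v (bb (k-1, 0))"
    using rk finI unfolding R_def by (simp add: if_distrib regI_def cong: if_cong)
  also have "bb (k-1, 0) = \<phi> (k-1, 0)" unfolding bb_def using K' by simp
  finally show ?thesis .
qed

definition "f l j = cinner ((S ^^ l) x) (\<phi> (N+j, 0))"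

lemma f0: "1 \<le> j \<Longrightarrow> j \<le> N-1 \<Longrightarrow> f 0 j = 0"
  unfolding f_def using inE_phi[OF inE_x] w_pos N3 by (simp add: inK)

lemma f11: "f 1 1 = complex_of_real c0"
proof -
  have Nk: "(N+1, 0) \<in> K" using NK1 m_pos by simp
  have "cinner (sE 0) (\<phi> (N+1, 0)) = complex_of_real (sqrt \<eta>)"
    unfolding sE_inner_l using inE_phi[OF inE_B Nk] Dv_phi[OF m_pos Nk] phiK[OF Nk Nk] N3 by simp
  then show ?thesis unfolding f_def c0_def using S_x by (simp add: cinner_scaleC_left)
qed

lemma f_rec: "\<forall>j. 1 \<le> j \<longrightarrow> j \<le> N-1 \<longrightarrow> f l j = (if l < j then 0 else f (l + 1 - j) 1)"
proof (induction l)
  case 0 then show ?case using f0 by simp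
next
  case (Suc l)
  show ?case
  proof (intro allI impI)
    fix j assume j: "1 \<le> j" "j \<le> N-1"
    show "f (Suc l) j = (if Suc l < j then 0 else f (Suc l + 1 - j) 1)"
    proof (cases "j = 1")
      case True then show ?thesis by simp
    next
      case False
      have "f (Suc l) j = cinner (S ((S ^^ l) x)) (\<phi> (N+j, 0))" unfolding f_def by simp
      also have "\<dots> = cinner ((S ^^ l) x) (\<phi> (N+j-1, 0))" using j False N3 by (intro shift) auto
      also have "\<dots> = f l (j-1)" unfolding f_def using j False by (simp add: Nat.add_diff_assoc)
      also have "\<dots> = (if l < j - 1 then 0 else f (l + 1 - (j-1)) 1)" using Suc.IH j False by simp
      finally show ?thesis using j False by (auto simp: Suc_diff_le)
    qed
  qed
qed

lemma f_last: "f l (N-1) = (if l = N-1 then complex_of_real c0 else 0)" if "l \<le> N-1"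
proof -
  have "f l (N-1) = (if l < N-1 then 0 else f (l + 1 - (N-1)) 1)" using f_rec N3 by simp
  then show ?thesis using that f11 by auto
qed

lemma PE_om: "PE om = complex_of_real (1 / c0) *\<^sub>C d"
proof -
  have "cinner om (e k) = complex_of_real (1 / c0) * cinner d (e k)" if "k < m" for k
  proof -
    have "cinner \<omega>G (e k) = 0" unfolding \<omega>G_def using phi_e[OF NK1 that]
      by (simp add: cinner_sum_left cinner_scaleC_left)
    then show ?thesis unfolding om_def \<omega>EG_def using phi_e[OF NK2 that]
      by (simp add: cinner_add_left cinner_scaleC_left)
  qed
  then have "PE om = (\<Sum>k<m. complex_of_real (1 / c0) *\<^sub>C (cinner d (e k) *\<^sub>C e k))"
    unfolding PE_def by (intro sum.cong) (auto simp: scaleC_scaleC)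
  also have "\<dots> = complex_of_real (1 / c0) *\<^sub>C d" by (subst d_E) (simp add: scaleC_sum_right)
  finally show ?thesis .
qed

lemma PE_S: "PE (S v) = complex_of_real \<rho> *\<^sub>C B (PE v) + cinner v (\<phi> (2*N-1, 0)) *\<^sub>C PE om"
proof -
  have inner: "cinner (S v) (e k) = complex_of_real \<rho> * cinner (B (PE v)) (e k)
      + cinner v (\<phi> (2*N-1, 0)) * cinner om (e k)" if k: "k < m" for k
  proof -
    have a: "cinner (ss (0, i)) (e k) = complex_of_real \<rho> * cinner (B (e i)) (e k)" if "i < m" for i
      using ss_E[of "(0, i)"] sE_inner_l Dv_inE[OF that inE_e[OF k]] phi_inE[OF inE_e[OF k] NK1[OF that]] by simp
    have c: "cinner (ss p) (e k) = 0" if "p \<in> R" for p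
    proof -
      have rp: "regI p" using that unfolding R_def by simp
      show ?thesis using ss_reg[OF rp] phi_e[OF sigma_K[OF rp] k] by simp
    qed
    have bsp: "bb (2*N-1, 0) = \<phi> (2*N-1, 0)" unfolding bb_def using N3 by simp
    have "cinner (S v) (e k) = (\<Sum>i<m. cinner v (e i) * (complex_of_real \<rho> * cinner (B (e i)) (e k)))
       + cinner v (\<phi> (2*N-1, 0)) * cinner om (e k)"
      unfolding S_inner I_split using a c ss_spec bsp by (simp add: bb_def)
    also have "(\<Sum>i<m. cinner v (e i) * (complex_of_real \<rho> * cinner (B (e i)) (e k)))
        = complex_of_real \<rho> * cinner (B (PE v)) (e k)"
      unfolding PE_def B_sum B_scale
      by (simp add: cinner_sum_left cinner_scaleC_left sum_distrib_left algebra_simps)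
    finally show ?thesis .
  qed
  have "PE (S v) = (\<Sum>k<m. (complex_of_real \<rho> * cinner (B (PE v)) (e k)) *\<^sub>C e k
      + (cinner v (\<phi> (2*N-1, 0)) * cinner om (e k)) *\<^sub>C e k)"
    unfolding PE_def[of "S v"] using inner by (intro sum.cong) (auto simp: scaleC_add_left)
  also have "\<dots> = complex_of_real \<rho> *\<^sub>C PE (B (PE v)) + cinner v (\<phi> (2*N-1, 0)) *\<^sub>C PE om"
    unfolding PE_def by (simp add: sum.distrib scaleC_sum_right scaleC_scaleC)
  also have "PE (B (PE v)) = B (PE v)" using inE_B unfolding inE_def by simp
  finally show ?thesis .
qed

definition "Rit l = ((\<lambda>u. complex_of_real \<rho> *\<^sub>C B u) ^^ l) x"

lemma PE_iter: "l \<le> N-1 \<Longrightarrow> PE ((S ^^ l) x) = Rit l"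
proof (induction l)
  case 0 then show ?case using inE_x unfolding inE_def Rit_def by simp
next
  case (Suc l)
  have "cinner ((S ^^ l) x) (\<phi> (2*N-1, 0)) = f l (N-1)" unfolding f_def using N3
    by (simp add: numeral_2_eq_2)
  also have "\<dots> = 0" using f_last[of l] Suc.prems by simp
  finally have z: "cinner ((S ^^ l) x) (\<phi> (2*N-1, 0)) = 0" .
  show ?case using Suc z unfolding Rit_def by (simp add: PE_S)
qed

lemma PE_final: "PE ((S ^^ N) x) = Rit N + d"
proof -
  have N1: "N = Suc (N-1)" using N3 by simp
  have "cinner ((S ^^ (N-1)) x) (\<phi> (2*N-1, 0)) = f (N-1) (N-1)" unfolding f_def using N3
    by (simp add: numeral_2_eq_2)
  also have "\<dots> = complex_of_real c0" using f_last[of "N-1"] by simp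
  finally have z: "cinner ((S ^^ (N-1)) x) (\<phi> (2*N-1, 0)) = complex_of_real c0" .
  have "PE ((S ^^ N) x) = PE (S ((S ^^ (N-1)) x))" by (subst N1) simp
  also have "\<dots> = complex_of_real \<rho> *\<^sub>C B (Rit (N-1)) + d"
    unfolding PE_S PE_iter[OF order_refl] z PE_om using c0_pos by (simp add: scaleC_scaleC scaleC_one)
  also have "complex_of_real \<rho> *\<^sub>C B (Rit (N-1)) = Rit N"
    unfolding Rit_def by (subst (2) N1) simp
  finally show ?thesis .
qed

end



context cons begin

definition "lev p = (if fst p \<le> N then fst p else fst p - N)"
definition "Lset l = {p \<in> I. lev p \<le> l}"

lemma Lset_sub: "Lset l \<subseteq> I" unfolding Lset_def by auto
lemma Lset_fin: "finite (Lset l)" using finite_subset[OF Lset_sub finI] .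

lemma bb_Span: "p \<in> I \<Longrightarrow> lev p \<le> l \<Longrightarrow> c *\<^sub>C bb p \<in> Span bb (Lset l)"
  by (rule Span_scale, rule Span_base[OF Lset_fin]) (simp add: Lset_def)

lemma ss_Span: assumes p: "p \<in> I" "lev p \<le> l" and l: "l + 1 \<le> N - 1"
  shows "ss p \<in> Span bb (Lset (l+1))"
proof (cases "fst p = 0")
  case True
  define i where "i = snd p"
  have i: "i < m" using I_E[OF p(1) True] unfolding i_def .
  have B: "B (e i) \<in> Span bb (Lset (l+1))"
  proof -
    have "B (e i) = (\<Sum>k<m. cinner (T (e i)) (e k) *\<^sub>C bb (0, k))" unfolding B_def bb_def by simp
    also have "\<dots> \<in> Span bb (Lset (l+1))"
      by (rule Span_sum, rule bb_Span) (auto simp: I_def lev_def)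
    finally show ?thesis .
  qed
  have D: "Dv i \<in> Span bb (Lset (l+1))"
  proof -
    obtain c where c: "Dv i = (\<Sum>j<w. c j *\<^sub>C \<phi> (1, j))" using Dv_span[OF i] by blast
    have "Dv i = (\<Sum>j<w. c j *\<^sub>C bb (1, j))" unfolding c bb_def by simp
    also have "\<dots> \<in> Span bb (Lset (l+1))"
      by (rule Span_sum, rule bb_Span) (use N3 in \<open>auto simp: I_def lev_def\<close>)
    finally show ?thesis .
  qed
  have P: "complex_of_real (sqrt \<eta>) *\<^sub>C \<phi> (N+1, i) \<in> Span bb (Lset (l+1))"
  proof -
    have "\<phi> (N+1, i) = bb (N+1, i)" unfolding bb_def by simp
    moreover have "complex_of_real (sqrt \<eta>) *\<^sub>C bb (N+1, i) \<in> Span bb (Lset (l+1))"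
      by (rule bb_Span) (use N3 i mw in \<open>auto simp: I_def lev_def\<close>)
    ultimately show ?thesis by simp
  qed
  show ?thesis unfolding ss_E[OF True] sE_def i_def[symmetric]
    by (intro Span_add Span_scale B D P)
next
  case False
  have ns: "p \<noteq> (2*N-1, 0)"
  proof
    assume "p = (2*N-1, 0)"
    then have "lev p = N - 1" unfolding lev_def using N3 by auto
    then show False using p l by simp
  qed
  have rp: "regI p" unfolding regI_def using p False ns by simp
  have sp: "\<sigma> p = (fst p + 1, snd p)"
  proof -
    have "fst p \<noteq> 2*N-1"
    proof
      assume "fst p = 2*N-1"
      then have "lev p = N - 1" unfolding lev_def using N3 by auto
      then show False using p l by simp
    qed
    then show ?thesis unfolding \<sigma>_def by simp
  qed
  have "\<sigma> p \<in> I" "lev (\<sigma> p) \<le> l + 1"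
    using p l False N3 unfolding sp I_def lev_def by auto
  moreover have "ss p = bb (\<sigma> p)" unfolding ss_reg[OF rp] bb_def sp by simp
  moreover have "\<sigma> p \<in> Lset (l+1) \<Longrightarrow> bb (\<sigma> p) \<in> Span bb (Lset (l+1))"
    by (rule Span_base[OF Lset_fin])
  ultimately show ?thesis unfolding Lset_def by simp
qed

lemma iter_Span: "l \<le> N-1 \<Longrightarrow> (S ^^ l) x \<in> Span bb (Lset l)"
proof (induction l)
  case 0
  have "x \<in> Span bb (Lset 0)" by (subst x_bb, rule bb_Span[OF E00]) (simp add: lev_def)
  then show ?case by simp
next
  case (Suc l)
  then obtain c where c: "(S ^^ l) x = (\<Sum>p\<in>Lset l. c p *\<^sub>C bb p)" unfolding Span_def by auto
  have "(S ^^ Suc l) x = (\<Sum>p\<in>Lset l. c p *\<^sub>C ss p)"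
    using opr_comb[OF orthon_bb orthon_ss finI Lset_sub] c unfolding S_def by simp
  also have "\<dots> \<in> Span bb (Lset (Suc l))"
  proof (rule Span_sum, rule Span_scale)
    fix p assume "p \<in> Lset l"
    then show "ss p \<in> Span bb (Lset (Suc l))" using ss_Span[of p l] Suc.prems unfolding Lset_def by simp
  qed
  finally show ?case .
qed

lemma iso: "l < N \<Longrightarrow> norm ((S ^^ (l+1)) x) = norm ((S ^^ l) x)"
  using opr_Span(2)[OF orthon_bb orthon_ss finI Lset_sub iter_Span[of l]] unfolding S_def by simp

lemma compress: assumes u: "inE u" and y: "inE y"
  shows "cinner (S u) y = complex_of_real \<rho> * cinner (T u) y"
proof -
  have a: "cinner (ss (0, i)) y = complex_of_real \<rho> * cinner (B (e i)) y" if "i < m" for i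
    using ss_E[of "(0, i)"] sE_inner_l Dv_inE[OF that y] phi_inE[OF y NK1[OF that]] by simp
  have sp: "(2*N-1, 0) \<in> K" using spec_I I_K N3 by simp
  have b: "cinner u (bb (2*N-1, 0)) = 0" unfolding bb_def using N3 inE_phi[OF u sp] by simp
  have c: "cinner u (bb p) = 0" if "p \<in> R" for p
    using that inE_phi[OF u I_K] unfolding R_def regI_def bb_def by auto
  have "cinner (S u) y = (\<Sum>i<m. cinner u (e i) * (complex_of_real \<rho> * cinner (B (e i)) y))"
    unfolding S_inner I_split using a b c by (simp add: bb_def)
  also have "\<dots> = complex_of_real \<rho> * cinner (B (PE u)) y"
    unfolding PE_def B_sum B_scale
    by (simp add: cinner_sum_left cinner_scaleC_left sum_distrib_left algebra_simps)
  also have "B (PE u) = B u" using u unfolding inE_def by simp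
  also have "cinner (B u) y = cinner (T u) y" unfolding B_PE by (rule PE_inner[OF y])
  finally show ?thesis .
qed

end



lemma comb_E:
  fixes m :: nat
  assumes "orthon e {..<m}" "v = (\<Sum>k<m. c k *\<^sub>C e k)"
  shows "v = (\<Sum>k<m. cinner v (e k) *\<^sub>C e k)"
proof -
  have "cinner v (e k) = c k" if "k < m" for k
  proof -
    have "cinner (\<Sum>i<m. c i *\<^sub>C e i) (e k) = c k" by (rule comb_inner[OF assms(1)]) (use that in auto)
    then show ?thesis using assms(2) by simp
  qed
  then show ?thesis using assms(2) by simp
qed

lemma main_lemma:
  fixes T :: "'a::complex_hilbert \<Rightarrow> 'a" and n :: nat and xs ys :: "nat \<Rightarrow> 'a"
  assumes infdim: "infinite_dimensional TYPE('a)"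
    and eta0: "0 < \<eta>" and eta1: "\<eta> \<le> 1/2" and N3: "3 \<le> N"
    and rhoN: "(sqrt (1 - \<eta>)) ^ N \<le> \<eta> / 2"
    and nrm: "\<forall>j\<in>{1..n}. norm (xs j) = 1 \<and> norm (ys j) = 1"
    and Tb: "bounded_op T" and To: "onorm T \<le> 1" and xnz: "x \<noteq> 0"
  shows "\<exists>(S::'a \<Rightarrow> 'a) (a::real).
              bounded_op S \<and> finite_rank S \<and> onorm S \<le> 1 \<and>
              (\<forall>j\<in>{1..n}. cmod (cinner (S (xs j) - T (xs j)) (ys j)) \<le> \<eta> \<and>
                           cinner (z - a *\<^sub>R (S ^^ N) x) (ys j) = 0) \<and>
              (\<forall>l<N. norm ((S ^^ (l + 1)) x) = norm ((S ^^ l) x))"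
proof -
  have T_lin: "clinear_op T" using Tb unfolding bounded_op_def by simp
  have T_bd: "norm (T u) \<le> norm u" for u
  proof -
    have "norm (T u) \<le> onorm T * norm u" by (rule onorm[OF bounded_op_bl[OF Tb]])
    also have "\<dots> \<le> 1 * norm u" by (rule mult_right_mono[OF To]) simp
    finally show ?thesis by simp
  qed
  define x0 where "x0 = complex_of_real (1 / norm x) *\<^sub>C x"
  have "norm x0 = 1" unfolding x0_def using xnz by (simp add: norm_scaleC norm_divide)
  then have x0x0: "cinner x0 x0 = 1" by (simp add: cinner_self_norm)
  have on1: "ci.on (\<lambda>_. x0) 1" unfolding ci.on_def using x0x0 by simp
  define vs where "vs = map xs [1..<n+1] @ map ys [1..<n+1]"
  obtain e m where em: "1 \<le> m" "\<forall>i<1. e i = x0" "ci.on e m" "\<forall>v\<in>set vs. ci.nullv (v - ci.proj e m v)"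
    using ci.gs[OF on1, of vs] by blast
  have e_on: "orthon e {..<m}" using em(3) unfolding ci.on_def orthon_def by simp
  have e00: "e 0 = x0" using em(2) by simp
  have e0: "x = complex_of_real (norm x) *\<^sub>C e 0" unfolding e00 x0_def using xnz
    by (simp add: scaleC_scaleC scaleC_one)
  define PE where "PE u = (\<Sum>k<m. cinner u (e k) *\<^sub>C e k)" for u
  have vsE: "v = PE v" if "v \<in> set vs" for v
    using em(4) that nullv_zero unfolding PE_def ci.proj_def by fastforce
  have xsE: "xs j = PE (xs j)" and ysE: "ys j = PE (ys j)" if "j \<in> {1..n}" for j
  proof -
    have js: "j \<in> set [1..<n+1]" using that by auto
    have "xs j \<in> set vs" "ys j \<in> set vs" unfolding vs_def set_append set_map
      using imageI[OF js, of xs] imageI[OF js, of ys] by blast+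
    then show "xs j = PE (xs j)" "ys j = PE (ys j)" using vsE by auto
  qed
  define B where "B u = (\<Sum>k<m. cinner (T u) (e k) *\<^sub>C e k)" for u
  have T_add: "T (u + v) = T u + T v" for u v using T_lin unfolding clinear_op_def by blast
  have T_scale: "T (c *\<^sub>C u) = c *\<^sub>C T u" for c u using T_lin unfolding clinear_op_def by blast
  have B_add: "B (u + v) = B u + B v" for u v
    unfolding B_def T_add by (simp add: cinner_add_left scaleC_add_left sum.distrib)
  have B_scale: "B (c *\<^sub>C u) = c *\<^sub>C B u" for c u
    unfolding B_def T_scale by (simp add: cinner_scaleC_left scaleC_sum_right scaleC_scaleC)
  have B_norm: "norm (B u) \<le> norm u" for u
  proof -
    have "(norm (B u))\<^sup>2 = (\<Sum>k<m. (cmod (cinner (T u) (e k)))\<^sup>2)"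
      unfolding B_def by (rule comb_norm2[OF e_on]) simp
    also have "\<dots> \<le> (norm (T u))\<^sup>2" by (rule bessel[OF e_on]) simp
    finally have "norm (B u) \<le> norm (T u)" by (simp add: power2_le_iff_abs_le)
    then show ?thesis using T_bd[of u] by linarith
  qed
  define q2 where "q2 u v = cinner u v - cinner (B u) (B v)" for u v
  interpret q2: hf q2
  proof
    fix u v y :: 'a and c
    show "q2 (u + v) y = q2 u y + q2 v y" unfolding q2_def B_add by (simp add: cinner_add_left)
    show "q2 (c *\<^sub>C u) y = c * q2 u y" unfolding q2_def B_scale by (simp add: cinner_scaleC_left algebra_simps)
    show "q2 y u = cnj (q2 u y)" unfolding q2_def by (metis cinner_commute complex_cnj_diff)
    have "(norm (B u))\<^sup>2 \<le> (norm u)\<^sup>2" using B_norm[of u] by (simp add: power_mono)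
    then show "0 \<le> Re (q2 u u)" unfolding q2_def by (simp add: cinner_self_norm)
  qed
  have on0: "q2.on (\<lambda>_. 0) 0" unfolding q2.on_def by simp
  obtain g2 r where gr: "q2.on g2 r" "\<forall>v\<in>set (map e [0..<m]). q2.nullv (v - q2.proj g2 r v)"
    using q2.gs[OF on0, of "map e [0..<m]"] by blast
  define w where "w = m + r"
  obtain \<phi> :: "nat \<times> nat \<Rightarrow> 'a" where \<phi>: "orthon \<phi> ({1..2*N+1} \<times> {..<w})"
    "\<forall>p\<in>{1..2*N+1} \<times> {..<w}. \<forall>a\<in>e ` {..<m}. cinner a (\<phi> p) = 0"
    using fresh[OF infdim, of "e ` {..<m}" "{1..2*N+1} \<times> {..<w}"] by auto
  define Dv where "Dv i = (\<Sum>j<w. (if j < r then q2 (e i) (g2 j) else 0) *\<^sub>C \<phi> (1, j))" for i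
  have on\<phi>1: "orthon (\<lambda>j. \<phi> (1, j)) {..<w}" using \<phi>(1) N3 unfolding orthon_def by auto
  have Dv_inner: "cinner (Dv i) (Dv k) = (if i = k then 1 else 0) - cinner (B (e i)) (B (e k))"
    if i: "i < m" and k: "k < m" for i k
  proof -
    have "cinner (Dv i) (Dv k) = (\<Sum>j<w. (if j < r then q2 (e i) (g2 j) else 0) * cnj (if j < r then q2 (e k) (g2 j) else 0))"
      unfolding Dv_def by (rule comb_cinner[OF on\<phi>1]) simp
    also have "\<dots> = (\<Sum>j<r. q2 (e i) (g2 j) * cnj (q2 (e k) (g2 j)))"
      unfolding w_def by (rule sum.mono_neutral_cong_right) auto
    also have "\<dots> = q2 (q2.proj g2 r (e i)) (e k)"
      unfolding q2.proj_def by (simp add: q2.sum_l q2.scale_l q2.comm[of "g2 _" "e k"])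
    also have "\<dots> = q2 (e i) (e k)"
    proof -
      have "q2.nullv (e i - q2.proj g2 r (e i))" using gr(2) i by auto
      then have "q2 (e i - q2.proj g2 r (e i)) (e k) = 0" unfolding q2.nullv_def by blast
      then show ?thesis by (simp add: q2.diff_l)
    qed
    also have "\<dots> = (if i = k then 1 else 0) - cinner (B (e i)) (B (e k))"
      unfolding q2_def using e_on i k unfolding orthon_def by simp
    finally show ?thesis .
  qed
  define \<rho> where "\<rho> = sqrt (1 - \<eta>)"
  define RN where "RN = ((\<lambda>u. complex_of_real \<rho> *\<^sub>C B u) ^^ N) x"
  have RN_norm: "norm (((\<lambda>u. complex_of_real \<rho> *\<^sub>C B u) ^^ l) x) \<le> \<rho> ^ l * norm x" for l
  proof (induction l)
    case 0 then show ?case by simp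
  next
    case (Suc l)
    have r0: "0 \<le> \<rho>" unfolding \<rho>_def using eta1 by simp
    have "norm (((\<lambda>u. complex_of_real \<rho> *\<^sub>C B u) ^^ Suc l) x)
        = \<rho> * norm (B (((\<lambda>u. complex_of_real \<rho> *\<^sub>C B u) ^^ l) x))"
      using r0 by (simp add: norm_scaleC)
    also have "\<dots> \<le> \<rho> * norm (((\<lambda>u. complex_of_real \<rho> *\<^sub>C B u) ^^ l) x)"
      by (rule mult_left_mono[OF B_norm r0])
    also have "\<dots> \<le> \<rho> * (\<rho> ^ l * norm x)" by (rule mult_left_mono[OF Suc.IH r0])
    finally show ?case by simp
  qed
  define p where "p = PE z"
  define t where "t = \<eta> * norm x / (2 * (norm p + 1))"
  have np1: "0 < norm p + 1" by (rule add_nonneg_pos[OF norm_ge_zero]) simp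
  then have "0 < 2 * (norm p + 1)" by (rule mult_pos_pos[rotated]) simp
  then have t0: "0 < t" unfolding t_def using eta0 xnz by (intro divide_pos_pos mult_pos_pos) auto
  define d where "d = complex_of_real t *\<^sub>C p - RN"
  have RN_form: "RN = (\<Sum>k<m. (complex_of_real \<rho> * cinner (T (((\<lambda>u. complex_of_real \<rho> *\<^sub>C B u) ^^ (N-1)) x)) (e k)) *\<^sub>C e k)"
  proof -
    have N1: "N = Suc (N-1)" using N3 by simp
    show ?thesis unfolding RN_def by (subst N1) (simp add: B_def scaleC_sum_right scaleC_scaleC)
  qed
  have d_E: "d = (\<Sum>k<m. cinner d (e k) *\<^sub>C e k)"
  proof (rule comb_E[OF e_on])
    show "d = (\<Sum>k<m. (complex_of_real t * cinner z (e k) - complex_of_real \<rho> *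
        cinner (T (((\<lambda>u. complex_of_real \<rho> *\<^sub>C B u) ^^ (N-1)) x)) (e k)) *\<^sub>C e k)"
      unfolding d_def p_def PE_def RN_form
      by (simp add: scaleC_diff_left sum_subtractf scaleC_sum_right scaleC_scaleC)
  qed
  have d_small: "norm d \<le> \<eta> * norm x"
  proof -
    have "norm d \<le> norm (complex_of_real t *\<^sub>C p) + norm RN" unfolding d_def by (rule norm_triangle_ineq4)
    also have "norm (complex_of_real t *\<^sub>C p) = t * norm p" using t0 by (simp add: norm_scaleC)
    also have "t * norm p \<le> \<eta> * norm x / 2"
    proof -
      have "t * norm p = \<eta> * norm x / 2 * (norm p / (norm p + 1))" unfolding t_def by (simp add: field_simps)
      also have "\<dots> \<le> \<eta> * norm x / 2 * 1"
        by (rule mult_left_mono) (use eta0 np1 in \<open>auto simp: divide_le_eq_1\<close>)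
      finally show ?thesis by simp
    qed
    also have "norm RN \<le> \<eta> / 2 * norm x"
      using RN_norm[of N] rhoN mult_right_mono[OF rhoN norm_ge_zero[of x]] unfolding RN_def \<rho>_def by linarith
    finally show ?thesis by simp
  qed
  interpret c: cons T x e m \<phi> N w \<eta> Dv d B
  proof
    show "clinear_op T" by (rule T_lin)
    show "\<And>u. norm (T u) \<le> norm u" by (rule T_bd)
    show "B = (\<lambda>u. \<Sum>k<m. cinner (T u) (e k) *\<^sub>C e k)" unfolding B_def ..
    show "orthon e {..<m}" by (rule e_on)
    show "0 < m" using em(1) by simp
    show "x = complex_of_real (norm x) *\<^sub>C e 0" by (rule e0)
    show "x \<noteq> 0" by (rule xnz)
    show "orthon \<phi> ({1..2*N+1} \<times> {..<w})" by (rule \<phi>(1))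
    show "\<And>p i. p \<in> {1..2*N+1} \<times> {..<w} \<Longrightarrow> i < m \<Longrightarrow> cinner (e i) (\<phi> p) = 0" using \<phi>(2) by blast
    show "3 \<le> N" by (rule N3)
    show "m \<le> w" unfolding w_def by simp
    show "0 < \<eta>" "\<eta> \<le> 1/2" by (rule eta0, rule eta1)
    show "\<exists>c. Dv i = (\<Sum>j<w. c j *\<^sub>C \<phi> (1, j))" if "i < m" for i
      unfolding Dv_def by (rule exI[where x="\<lambda>j. if j < r then q2 (e i) (g2 j) else 0"]) simp
    show "\<And>i k. i < m \<Longrightarrow> k < m \<Longrightarrow>
        cinner (Dv i) (Dv k) = (if i = k then 1 else 0) - cinner (B (e i)) (B (e k))" by (rule Dv_inner)
    show "d = (\<Sum>k<m. cinner d (e k) *\<^sub>C e k)" by (rule d_E)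
    show "norm d \<le> \<eta> * norm x" by (rule d_small)
  qed
  have PEc: "c.PE = PE" unfolding c.PE_def PE_def ..
  have rhoc: "c.\<rho> = \<rho>" unfolding c.\<rho>_def \<rho>_def ..
  have ritN: "c.Rit N = RN" unfolding c.Rit_def RN_def rhoc ..
  define a where "a = 1 / t"
  have rho_ge: "1 - \<eta> \<le> \<rho>"
  proof -
    have "(1 - \<eta>)\<^sup>2 \<le> 1 - \<eta>" using eta0 eta1 by (simp add: power2_eq_square mult_le_cancel_right1)
    then show ?thesis unfolding \<rho>_def using real_le_rsqrt by blast
  qed
  have rho_le: "\<rho> \<le> 1" unfolding \<rho>_def using eta0 by simp
  show ?thesis
  proof (intro exI[of _ c.S] exI[of _ a] conjI ballI allI impI)
    show "bounded_op c.S" by (rule c.S_bounded)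
    show "finite_rank c.S" by (rule c.S_fr)
    show "onorm c.S \<le> 1" by (rule c.S_onorm)
  next
    fix j assume j: "j \<in> {1..n}"
    have xe: "c.inE (xs j)" and ye: "c.inE (ys j)" unfolding c.inE_def PEc using xsE[OF j] ysE[OF j] by auto
    have "cinner (c.S (xs j) - T (xs j)) (ys j) = complex_of_real (\<rho> - 1) * cinner (T (xs j)) (ys j)"
      using c.compress[OF xe ye] rhoc by (simp add: cinner_diff_left algebra_simps)
    then have "cmod (cinner (c.S (xs j) - T (xs j)) (ys j)) = (1 - \<rho>) * cmod (cinner (T (xs j)) (ys j))"
    proof -
      have "cmod (complex_of_real (\<rho> - 1)) = \<bar>\<rho> - 1\<bar>" by (rule norm_of_real)
      then have cm: "cmod (complex_of_real \<rho> - 1) = 1 - \<rho>" using rho_le by simp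
      from \<open>cinner (c.S (xs j) - T (xs j)) (ys j) = _\<close> show ?thesis by (simp add: norm_mult cm)
    qed
    also have "\<dots> \<le> (1 - \<rho>) * 1"
    proof (rule mult_left_mono)
      have "cmod (cinner (T (xs j)) (ys j)) \<le> norm (T (xs j)) * norm (ys j)" by (rule cauchy_schwarz)
      also have "\<dots> \<le> 1" using T_bd[of "xs j"] nrm j by simp
      finally show "cmod (cinner (T (xs j)) (ys j)) \<le> 1" .
    qed (use rho_le in simp)
    also have "\<dots> \<le> \<eta>" using rho_ge by simp
    finally show "cmod (cinner (c.S (xs j) - T (xs j)) (ys j)) \<le> \<eta>" .
    have "cinner ((c.S ^^ N) x) (ys j) = cinner (c.PE ((c.S ^^ N) x)) (ys j)"
      using c.PE_inner[OF ye] by simp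
    also have "\<dots> = cinner (complex_of_real t *\<^sub>C p) (ys j)"
      unfolding c.PE_final ritN by (simp add: d_def)
    also have "\<dots> = complex_of_real t * cinner z (ys j)"
      unfolding p_def PEc[symmetric] using c.PE_inner[OF ye] by (simp add: cinner_scaleC_left)
    finally have "cinner ((c.S ^^ N) x) (ys j) = complex_of_real t * cinner z (ys j)" .
    then show "cinner (z - a *\<^sub>R (c.S ^^ N) x) (ys j) = 0"
      unfolding a_def scaleR_scaleC using t0
      by (simp add: cinner_diff_left cinner_scaleC_left)
  next
    fix l :: nat assume "l < N"
    then show "norm ((c.S ^^ (l + 1)) x) = norm ((c.S ^^ l) x)" by (rule c.iso)
  qed
qed


theorem corollary9:
  assumes sep: "separable_space (euclidean :: 'a::complex_hilbert topology)"
    and infdim: "infinite_dimensional TYPE('a)"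
  shows "\<forall>\<epsilon>>0. \<exists>N::nat. \<forall>(n::nat) (xs::nat \<Rightarrow> 'a) (ys::nat \<Rightarrow> 'a) (T::'a \<Rightarrow> 'a) (x::'a) (z::'a).
           (\<forall>j\<in>{1..n}. norm (xs j) = 1 \<and> norm (ys j) = 1) \<and>
           bounded_op T \<and> onorm T \<le> 1 \<and> x \<noteq> 0 \<longrightarrow>
           (\<exists>(S::'a \<Rightarrow> 'a) (a::real).
              bounded_op S \<and> finite_rank S \<and> onorm S \<le> 1 \<and>
              (\<forall>j\<in>{1..n}. cmod (cinner (S (xs j) - T (xs j)) (ys j)) < \<epsilon> \<and>
                           cinner (z - a *\<^sub>R (S ^^ N) x) (ys j) = 0) \<and>
              (\<forall>l<N. norm ((S ^^ (l + 1)) x) = norm ((S ^^ l) x)))"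
proof (intro allI impI)
  fix \<epsilon> :: real assume eps: "\<epsilon> > 0"
  define \<eta> where "\<eta> = min (\<epsilon> / 2) (1 / 2)"
  have eta0: "0 < \<eta>" and eta1: "\<eta> \<le> 1/2" and eta_eps: "\<eta> < \<epsilon>"
    unfolding \<eta>_def using eps by auto
  define \<rho> where "\<rho> = sqrt (1 - \<eta>)"
  have r1: "\<rho> < 1" unfolding \<rho>_def using eta0 eta1 by simp
  have r0: "0 \<le> \<rho>" unfolding \<rho>_def using eta1 by simp
  obtain N0 where N0: "\<rho> ^ N0 < \<eta> / 2" using real_arch_pow_inv[of "\<eta> / 2" \<rho>] eta0 r1 by auto
  define N where "N = max 3 N0"
  have N3: "3 \<le> N" unfolding N_def by simp
  have "\<rho> ^ N \<le> \<rho> ^ N0" unfolding N_def by (rule power_decreasing) (use r0 r1 in auto)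
  then have rhoN: "(sqrt (1 - \<eta>)) ^ N \<le> \<eta> / 2" using N0 unfolding \<rho>_def by simp
  show "\<exists>N::nat. \<forall>(n::nat) (xs::nat \<Rightarrow> 'a) (ys::nat \<Rightarrow> 'a) (T::'a \<Rightarrow> 'a) (x::'a) (z::'a).
           (\<forall>j\<in>{1..n}. norm (xs j) = 1 \<and> norm (ys j) = 1) \<and>
           bounded_op T \<and> onorm T \<le> 1 \<and> x \<noteq> 0 \<longrightarrow>
           (\<exists>(S::'a \<Rightarrow> 'a) (a::real).
              bounded_op S \<and> finite_rank S \<and> onorm S \<le> 1 \<and>
              (\<forall>j\<in>{1..n}. cmod (cinner (S (xs j) - T (xs j)) (ys j)) < \<epsilon> \<and>
                           cinner (z - a *\<^sub>R (S ^^ N) x) (ys j) = 0) \<and>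
              (\<forall>l<N. norm ((S ^^ (l + 1)) x) = norm ((S ^^ l) x)))"
  proof (rule exI[of _ N], intro allI impI)
    fix n :: nat and xs ys :: "nat \<Rightarrow> 'a" and T :: "'a \<Rightarrow> 'a" and x z :: 'a
    assume H: "(\<forall>j\<in>{1..n}. norm (xs j) = 1 \<and> norm (ys j) = 1) \<and> bounded_op T \<and> onorm T \<le> 1 \<and> x \<noteq> 0"
    obtain S a where S: "bounded_op S" "finite_rank S" "onorm S \<le> 1"
      "\<forall>j\<in>{1..n}. cmod (cinner (S (xs j) - T (xs j)) (ys j)) \<le> \<eta> \<and> cinner (z - a *\<^sub>R (S ^^ N) x) (ys j) = 0"
      "\<forall>l<N. norm ((S ^^ (l + 1)) x) = norm ((S ^^ l) x)"
      using main_lemma[where T=T and n=n and xs=xs and ys=ys and x=x and z=z and \<eta>=\<eta> and N=N,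
          OF infdim eta0 eta1 N3 rhoN] H by blast
    show "\<exists>(S::'a \<Rightarrow> 'a) (a::real).
              bounded_op S \<and> finite_rank S \<and> onorm S \<le> 1 \<and>
              (\<forall>j\<in>{1..n}. cmod (cinner (S (xs j) - T (xs j)) (ys j)) < \<epsilon> \<and>
                           cinner (z - a *\<^sub>R (S ^^ N) x) (ys j) = 0) \<and>
              (\<forall>l<N. norm ((S ^^ (l + 1)) x) = norm ((S ^^ l) x))"
    proof (intro exI[of _ S] exI[of _ a] conjI ballI)
      fix j assume j: "j \<in> {1..n}"
      show "cmod (cinner (S (xs j) - T (xs j)) (ys j)) < \<epsilon>" using S(4) j eta_eps by fastforce
      show "cinner (z - a *\<^sub>R (S ^^ N) x) (ys j) = 0" using S(4) j by blast
    qed (use S in auto)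
  qed
qed

end
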